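(* Let $T$ be a tree of order $n$ with $\operatorname{diam}(T)\geq 4$, and let $T_1$ be a tree obtained from $T$ by a proper generalized tree shift. Then $\mu_1(\overline{T_1})> \mu_1(\overline{T})$, where $\mu_1(G)$ denotes the distance signless Laplacian spectral radius of $G$ and $\overline{G}$ denotes the complement of $G$.
   Context: For a connected graph $G$ with vertices $v_1,\dots,v_n$, the distance matrix $D(G)$ has $(v_i,v_j)$-entry equal to the distance $d_G(v_i,v_j)$. The transmission $\operatorname{Tr}(v_i)=\sum_j d_G(v_i,v_j)$, and $\operatorname{Tr}(G)=\operatorname{diag}(\operatorname{Tr}(v_1),\dots,\operatorname{Tr}(v_n))$. The distance signless Laplacian matrix is $D^Q(G)=\operatorname{Tr}(G)+D(G)$, and $\mu_1(G)$ is its largest eigenvalue. The complement $\overline{G}$ has the same vertex set as $G$, with two distinct vertices adjacent iff they are non-adjacent in $G$. Generalized tree shift (GTS): let $T$ be a tree and $u,v\in V(T)$ such that all interior vertices of the path $uPv$ from $u$ to $v$ in $T$ (if any) have degree $2$. Let $w$ be the neighbor of $v$ on the path $uPv$ (possibly $w=u$). The tree $T_1$ is obtained from $T$ by deleting all edges between $v$ and $N_T(v)\setminus\{w\}$ and adding all edges between $u$ and $N_T(v)\setminus\{w\}$. The GTS is called proper if neither $u$ nor $v$ is a pendant vertex of $T$; in that case $T_1$ has one more pendant vertex than $T$. *)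

theory Defs
  imports Complex_Main
begin

definition simple_graph :: "'a set \<Rightarrow> 'a set set \<Rightarrow> bool" where
  "simple_graph V E \<longleftrightarrow> finite V \<and> E \<subseteq> {{x, y} | x y. x \<in> V \<and> y \<in> V \<and> x \<noteq> y}"

definition walk :: "'a set \<Rightarrow> 'a set set \<Rightarrow> 'a list \<Rightarrow> bool" where
  "walk V E xs \<longleftrightarrow> xs \<noteq> [] \<and> set xs \<subseteq> V \<and>
     (\<forall>i. Suc i < length xs \<longrightarrow> {xs ! i, xs ! Suc i} \<in> E)"

definition connected_graph :: "'a set \<Rightarrow> 'a set set \<Rightarrow> bool" where
  "connected_graph V E \<longleftrightarrow>
     (\<forall>x\<in>V. \<forall>y\<in>V. \<exists>xs. walk V E xs \<and> hd xs = x \<and> last xs = y)"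

definition is_cycle :: "'a set \<Rightarrow> 'a set set \<Rightarrow> 'a list \<Rightarrow> bool" where
  "is_cycle V E xs \<longleftrightarrow> walk V E xs \<and> distinct xs \<and> length xs \<ge> 3 \<and> {last xs, hd xs} \<in> E"

definition is_tree :: "'a set \<Rightarrow> 'a set set \<Rightarrow> bool" where
  "is_tree V E \<longleftrightarrow> simple_graph V E \<and> V \<noteq> {} \<and> connected_graph V E \<and>
     \<not> (\<exists>xs. is_cycle V E xs)"

definition neighbors :: "'a set \<Rightarrow> 'a set set \<Rightarrow> 'a \<Rightarrow> 'a set" where
  "neighbors V E x = {y \<in> V. {x, y} \<in> E}"

definition degree :: "'a set \<Rightarrow> 'a set set \<Rightarrow> 'a \<Rightarrow> nat" where
  "degree V E x = card (neighbors V E x)"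

definition pendant :: "'a set \<Rightarrow> 'a set set \<Rightarrow> 'a \<Rightarrow> bool" where
  "pendant V E x \<longleftrightarrow> degree V E x = 1"

definition dist_G :: "'a set \<Rightarrow> 'a set set \<Rightarrow> 'a \<Rightarrow> 'a \<Rightarrow> nat" where
  "dist_G V E x y = (LEAST n. \<exists>xs. walk V E xs \<and> hd xs = x \<and> last xs = y \<and> length xs = Suc n)"

definition diameter_ge :: "'a set \<Rightarrow> 'a set set \<Rightarrow> nat \<Rightarrow> bool" where
  "diameter_ge V E k \<longleftrightarrow> (\<exists>x\<in>V. \<exists>y\<in>V. dist_G V E x y \<ge> k)"

definition complement :: "'a set \<Rightarrow> 'a set set \<Rightarrow> 'a set set" where
  "complement V E = {{x, y} | x y. x \<in> V \<and> y \<in> V \<and> x \<noteq> y \<and> {x, y} \<notin> E}"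

definition transmission :: "'a set \<Rightarrow> 'a set set \<Rightarrow> 'a \<Rightarrow> real" where
  "transmission V E x = (\<Sum>y\<in>V. real (dist_G V E x y))"

definition dsl_matrix :: "'a set \<Rightarrow> 'a set set \<Rightarrow> 'a \<Rightarrow> 'a \<Rightarrow> real" where
  "dsl_matrix V E x y = (if x = y then transmission V E x else 0) + real (dist_G V E x y)"

definition is_eigenvalue_on :: "'a set \<Rightarrow> ('a \<Rightarrow> 'a \<Rightarrow> real) \<Rightarrow> real \<Rightarrow> bool" where
  "is_eigenvalue_on V M lam \<longleftrightarrow> (\<exists>f :: 'a \<Rightarrow> real. (\<exists>x\<in>V. f x \<noteq> 0) \<and>
      (\<forall>x\<in>V. (\<Sum>y\<in>V. M x y * f y) = lam * f x))"

definition mu1 :: "'a set \<Rightarrow> 'a set set \<Rightarrow> real" where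
  "mu1 V E = Max {lam. is_eigenvalue_on V (dsl_matrix V E) lam}"

definition gts :: "'a set \<Rightarrow> 'a set set \<Rightarrow> 'a \<Rightarrow> 'a \<Rightarrow> 'a set set \<Rightarrow> bool" where
  "gts V E u v E1 \<longleftrightarrow> (\<exists>P. walk V E P \<and> distinct P \<and> length P \<ge> 2 \<and> hd P = u \<and> last P = v \<and>
     (\<forall>i. 0 < i \<and> i < length P - 1 \<longrightarrow> degree V E (P ! i) = 2) \<and>
     (let w = P ! (length P - 2); X = neighbors V E v - {w} in
        E1 = (E - {{v, x} | x. x \<in> X}) \<union> {{u, x} | x. x \<in> X}))"

definition proper_gts :: "'a set \<Rightarrow> 'a set set \<Rightarrow> 'a \<Rightarrow> 'a \<Rightarrow> 'a set set \<Rightarrow> bool" where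
  "proper_gts V E u v E1 \<longleftrightarrow> gts V E u v E1 \<and> \<not> pendant V E u \<and> \<not> pendant V E v"

end

theory Submission
  imports Defs "HOL-Analysis.Analysis" "Jordan_Normal_Form.Char_Poly"
begin


definition qf :: "'a set \<Rightarrow> ('a \<Rightarrow> 'a \<Rightarrow> real) \<Rightarrow> ('a \<Rightarrow> real) \<Rightarrow> real" where
  "qf V M z = (\<Sum>a\<in>V. \<Sum>b\<in>V. M a b * z a * z b)"
definition nrm :: "'a set \<Rightarrow> ('a \<Rightarrow> real) \<Rightarrow> real" where
  "nrm V z = (\<Sum>a\<in>V. (z a)^2)"
definition mv :: "'a set \<Rightarrow> ('a \<Rightarrow> 'a \<Rightarrow> real) \<Rightarrow> ('a \<Rightarrow> real) \<Rightarrow> 'a \<Rightarrow> real" where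
  "mv V M z a = (\<Sum>b\<in>V. M a b * z b)"

lemma eig_finite:
  assumes "finite V"
  shows "finite {lam. is_eigenvalue_on V M lam}"
proof -
  obtain xs where xs: "set xs = V" "distinct xs" using finite_distinct_list[OF assms] by blast
  define n where "n = length xs"
  define A :: "real mat" where "A = Matrix.mat n n (\<lambda>(i,j). M (xs!i) (xs!j))"
  have Ac: "A \<in> carrier_mat n n" unfolding A_def by auto
  have "{lam. is_eigenvalue_on V M lam} \<subseteq> {x. poly (char_poly A) x = 0}"
  proof
    fix lam assume "lam \<in> {lam. is_eigenvalue_on V M lam}"
    then obtain f where f: "\<exists>x\<in>V. f x \<noteq> 0" "\<forall>x\<in>V. (\<Sum>y\<in>V. M x y * f y) = lam * f x"
      unfolding is_eigenvalue_on_def by auto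
    define v where "v = Matrix.vec n (\<lambda>i. f (xs!i))"
    have bij: "bij_betw ((!) xs) {..<n} V" using bij_betw_nth[OF xs(2)] xs(1) n_def by auto
    have vc: "v \<in> carrier_vec n" unfolding v_def by auto
    have v0: "v \<noteq> 0\<^sub>v n"
    proof
      assume "v = 0\<^sub>v n"
      from f(1) obtain x where x: "x \<in> V" "f x \<noteq> 0" by auto
      then obtain i where "i < n" "xs ! i = x" using xs n_def by (metis in_set_conv_nth)
      then have "v $ i = f x" unfolding v_def by auto
      with \<open>v = 0\<^sub>v n\<close> \<open>i < n\<close> x show False by auto
    qed
    have "A *\<^sub>v v = lam \<cdot>\<^sub>v v"
    proof (rule eq_vecI)
      fix i assume i: "i < dim_vec (lam \<cdot>\<^sub>v v)"
      then have i': "i < n" unfolding v_def by auto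
      have "(A *\<^sub>v v) $ i = (\<Sum>j<n. M (xs!i) (xs!j) * f (xs!j))"
        using i' unfolding A_def v_def by (auto simp: scalar_prod_def Matrix.row_def lessThan_atLeast0)
      also have "\<dots> = (\<Sum>y\<in>V. M (xs!i) y * f y)"
        using sum.reindex_bij_betw[OF bij, of "\<lambda>y. M (xs!i) y * f y"] by simp
      also have "\<dots> = lam * f (xs!i)" using f(2) i' xs n_def by auto
      finally show "(A *\<^sub>v v) $ i = (lam \<cdot>\<^sub>v v) $ i" using i' unfolding v_def by auto
    qed (auto simp: A_def v_def)
    then have "eigenvalue A lam" unfolding eigenvalue_def eigenvector_def using vc v0 Ac by auto
    then show "lam \<in> {x. poly (char_poly A) x = 0}" using eigenvalue_root_char_poly[OF Ac] by auto
  qed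
  moreover have "char_poly A \<noteq> 0" using degree_monic_char_poly[OF Ac] by auto
  ultimately show ?thesis using poly_roots_finite finite_subset by blast
qed


lemma qf_cong: "(\<And>a. a \<in> V \<Longrightarrow> f a = g a) \<Longrightarrow> qf V M f = qf V M g"
  unfolding qf_def by (intro sum.cong refl) auto
lemma nrm_cong: "(\<And>a. a \<in> V \<Longrightarrow> f a = g a) \<Longrightarrow> nrm V f = nrm V g"
  unfolding nrm_def by (intro sum.cong refl) auto

lemma nrm_nonneg: "nrm V z \<ge> 0" unfolding nrm_def by (simp add: sum_nonneg)

lemma nrm_zero: "finite V \<Longrightarrow> nrm V z = 0 \<Longrightarrow> a \<in> V \<Longrightarrow> z a = 0"
  unfolding nrm_def using sum_nonneg_eq_0_iff[of V "\<lambda>a. (z a)^2"] by auto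

lemma qf_scale: "qf V M (\<lambda>a. c * z a) = c^2 * qf V M z"
  unfolding qf_def by (simp add: sum_distrib_left power2_eq_square algebra_simps)
lemma nrm_scale: "nrm V (\<lambda>a. c * z a) = c^2 * nrm V z"
  unfolding nrm_def by (simp add: sum_distrib_left power2_eq_square algebra_simps)

lemma exists_max:
  assumes fin: "finite V" and ne: "V \<noteq> {}"
  shows "\<exists>R. (\<forall>z. qf V M z \<le> R * nrm V z) \<and> (\<exists>z. nrm V z = 1 \<and> qf V M z = R)"
proof -
  define X :: "('a \<Rightarrow> real) topology" where "X = product_topology (\<lambda>_. euclideanreal) V"
  define K where "K = PiE V (\<lambda>_. {-1..1::real})"
  have cK: "compactin X K" unfolding X_def K_def by (simp add: compactin_PiE)
  have proj: "a \<in> V \<Longrightarrow> continuous_map X euclideanreal (\<lambda>x. x a)" for a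
    unfolding X_def using continuous_map_product_projection[of a V "\<lambda>_. euclideanreal"] by simp
  have cn: "continuous_map X euclideanreal (nrm V)"
    unfolding nrm_def power2_eq_square
    by (intro continuous_map_sum fin continuous_map_real_mult proj)
  have cq: "continuous_map X euclideanreal (qf V M)"
    unfolding qf_def
    by (intro continuous_map_sum fin continuous_map_real_mult proj continuous_map_const[THEN iffD2]) auto
  define S where "S = K \<inter> {x \<in> topspace X. nrm V x \<in> {1}}"
  have cS: "compactin X S" unfolding S_def
    by (intro compact_Int_closedin cK closedin_continuous_map_preimage[OF cn]) (simp add: closed_closedin[symmetric])
  have ciS: "compact (qf V M ` S)"
    using image_compactin[OF cS cq] by simp
  obtain a0 where a0: "a0 \<in> V" using ne by auto
  define e where "e = (\<lambda>b. if b \<in> V then (if b = a0 then 1 else 0) else undefined::real)"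
  have "nrm V e = 1" unfolding nrm_def e_def using fin a0
    by (simp add: if_distrib[of "\<lambda>x. x^2"] cong: if_cong)
  moreover have "e \<in> K" unfolding K_def e_def by auto
  moreover have "e \<in> topspace X" unfolding X_def e_def by auto
  ultimately have "e \<in> S" unfolding S_def by auto
  then have "qf V M ` S \<noteq> {}" by auto
  from compact_attains_sup[OF ciS this] obtain s where s: "s \<in> qf V M ` S" "\<forall>t\<in>qf V M ` S. t \<le> s"
    by blast
  from s(1) obtain z0 where z0: "z0 \<in> S" "qf V M z0 = s" by auto
  have "\<forall>z. qf V M z \<le> s * nrm V z"
  proof
    fix z
    show "qf V M z \<le> s * nrm V z"
    proof (cases "nrm V z = 0")
      case True
      then have "qf V M z = 0" unfolding qf_def using nrm_zero[OF fin True] by simp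
      then show ?thesis using True by simp
    next
      case False
      then have np: "nrm V z > 0" using nrm_nonneg[of V z] by simp
      define c where "c = sqrt (nrm V z)"
      have cp: "c > 0" unfolding c_def using np by simp
      have c2: "c^2 = nrm V z" unfolding c_def using np by simp
      define z' where "z' = restrict (\<lambda>a. (1/c) * z a) V"
      have le: "\<bar>z a\<bar> \<le> c" if "a \<in> V" for a
      proof -
        have "(z a)^2 \<le> nrm V z" unfolding nrm_def
          using member_le_sum[of a V "\<lambda>a. (z a)^2"] fin that by auto
        then show ?thesis unfolding c_def by (metis real_sqrt_abs real_sqrt_le_mono)
      qed
      have "z' \<in> K" unfolding K_def z'_def using le cp
        by (auto simp: abs_le_iff divide_simps) (metis neg_le_iff_le minus_minus)
      moreover have "z' \<in> topspace X" unfolding X_def z'_def by auto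
      moreover have "nrm V z' = 1"
        using nrm_scale[of V "1/c" z] c2 cp nrm_cong[of V z' "\<lambda>a. (1/c) * z a"]
        unfolding z'_def using np by (simp add: power_divide)
      ultimately have "z' \<in> S" unfolding S_def by auto
      then have "qf V M z' \<le> s" using s(2) by auto
      moreover have "qf V M z' = (1/c)^2 * qf V M z"
        using qf_scale[of V M "1/c" z] qf_cong[of V z' "\<lambda>a. (1/c) * z a"] unfolding z'_def by simp
      ultimately have "qf V M z \<le> s * c^2" using cp by (simp add: power_divide divide_simps)
      then show ?thesis using c2 by simp
    qed
  qed
  moreover have "nrm V z0 = 1" using z0(1) unfolding S_def by auto
  ultimately show ?thesis using z0 by blast
qed


lemma max_eig:
  assumes fin: "finite V" and sym: "\<forall>a\<in>V. \<forall>b\<in>V. M a b = M b a"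
  and max: "\<forall>z. qf V M z \<le> R * nrm V z" and eq: "qf V M x = R * nrm V x"
  shows "\<forall>a\<in>V. mv V M x a = R * x a"
proof -
  define y where "y a = mv V M x a - R * x a" for a
  have c1: "(\<Sum>a\<in>V. \<Sum>b\<in>V. M a b * x a * y b) = (\<Sum>a\<in>V. y a * mv V M x a)"
    unfolding mv_def sum_distrib_left
    apply (subst sum.swap)
    apply (intro sum.cong refl)
    using sym by (auto simp: algebra_simps)
  have c2: "(\<Sum>a\<in>V. \<Sum>b\<in>V. M a b * y a * x b) = (\<Sum>a\<in>V. y a * mv V M x a)"
    unfolding mv_def sum_distrib_left by (intro sum.cong refl) (simp add: algebra_simps)
  have h1: "qf V M (\<lambda>a. x a + t * y a) = qf V M x + t * (\<Sum>a\<in>V. \<Sum>b\<in>V. M a b * x a * y b)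
     + t * (\<Sum>a\<in>V. \<Sum>b\<in>V. M a b * y a * x b) + t^2 * qf V M y" for t
    unfolding qf_def sum_distrib_left sum.distrib[symmetric] power2_eq_square
    by (intro sum.cong refl) (simp add: algebra_simps)
  have h2: "nrm V (\<lambda>a. x a + t * y a) = nrm V x + 2 * t * (\<Sum>a\<in>V. x a * y a) + t^2 * nrm V y" for t
    unfolding nrm_def sum_distrib_left sum.distrib[symmetric] power2_eq_square
    by (intro sum.cong refl) (simp add: algebra_simps)
  have h3: "(\<Sum>a\<in>V. y a * mv V M x a) - R * (\<Sum>a\<in>V. x a * y a) = nrm V y"
    unfolding nrm_def sum_distrib_left sum_subtractf[symmetric]
    by (intro sum.cong refl) (simp add: y_def power2_eq_square algebra_simps)
  define c where "c = nrm V y"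
  define d where "d = qf V M y - R * nrm V y"
  have key: "2 * t * c + t^2 * d \<le> 0" for t
  proof -
    have "qf V M (\<lambda>a. x a + t * y a) \<le> R * nrm V (\<lambda>a. x a + t * y a)" using max by auto
    then have "qf V M x + 2 * t * (\<Sum>a\<in>V. y a * mv V M x a) + t^2 * qf V M y
       \<le> R * (nrm V x + 2 * t * (\<Sum>a\<in>V. x a * y a) + t^2 * nrm V y)"
      unfolding h1 h2 c1 c2 by (simp add: algebra_simps)
    then have "2 * t * ((\<Sum>a\<in>V. y a * mv V M x a) - R * (\<Sum>a\<in>V. x a * y a)) + t^2 * d \<le> 0"
      using eq unfolding d_def by (simp add: algebra_simps)
    then show ?thesis unfolding h3 c_def .
  qed
  have "c = 0"
  proof (rule ccontr)
    assume "c \<noteq> 0"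
    then have cp: "c > 0" unfolding c_def using nrm_nonneg[of V y] by simp
    define t where "t = c / (\<bar>d\<bar> + 1)"
    have tp: "t > 0" unfolding t_def using cp by simp
    have "t * \<bar>d\<bar> \<le> c" unfolding t_def using cp by (simp add: divide_simps)
    then have "t^2 * d \<ge> - (t * c)" using tp
    proof -
      have "t * (t * \<bar>d\<bar>) \<le> t * c" using tp \<open>t * \<bar>d\<bar> \<le> c\<close> by (simp add: mult_left_mono)
      moreover have "t^2 * d \<ge> - (t * (t * \<bar>d\<bar>))"
      proof -
        have "t^2 * (-\<bar>d\<bar>) \<le> t^2 * d" by (rule mult_left_mono) auto
        then show ?thesis by (simp add: power2_eq_square algebra_simps)
      qed
      ultimately show ?thesis by linarith
    qed
    moreover have "t * c > 0" using tp cp by simp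
    ultimately have "2 * t * c + t^2 * d > 0" by linarith
    with key[of t] show False by simp
  qed
  then show ?thesis using nrm_zero[OF fin, of y] unfolding c_def y_def by auto
qed

lemma mu_char:
  assumes fin: "finite V" and ne: "V \<noteq> {}" and sym: "\<forall>a\<in>V. \<forall>b\<in>V. M a b = M b a"
  shows "\<exists>R. Max {lam. is_eigenvalue_on V M lam} = R \<and> (\<forall>z. qf V M z \<le> R * nrm V z)
     \<and> (\<exists>z. nrm V z = 1 \<and> qf V M z = R)"
proof -
  obtain R z0 where R: "\<forall>z. qf V M z \<le> R * nrm V z" and z0: "nrm V z0 = 1" "qf V M z0 = R"
    using exists_max[OF fin ne, of M] by blast
  have "\<forall>a\<in>V. mv V M z0 a = R * z0 a" using max_eig[OF fin sym R] z0 by simp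
  moreover have "\<exists>a\<in>V. z0 a \<noteq> 0"
  proof (rule ccontr)
    assume "\<not> (\<exists>a\<in>V. z0 a \<noteq> 0)"
    then have "nrm V z0 = 0" unfolding nrm_def by simp
    then show False using z0(1) by simp
  qed
  ultimately have eR: "is_eigenvalue_on V M R" unfolding is_eigenvalue_on_def mv_def by blast
  have le: "lam \<le> R" if "is_eigenvalue_on V M lam" for lam
  proof -
    from that obtain f where f: "\<exists>x\<in>V. f x \<noteq> 0" "\<forall>x\<in>V. (\<Sum>y\<in>V. M x y * f y) = lam * f x"
      unfolding is_eigenvalue_on_def by auto
    have "qf V M f = (\<Sum>a\<in>V. f a * (\<Sum>b\<in>V. M a b * f b))"
      unfolding qf_def by (simp add: sum_distrib_left algebra_simps)
    also have "\<dots> = (\<Sum>a\<in>V. lam * (f a)^2)" using f(2) by (simp add: power2_eq_square algebra_simps)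
    also have "\<dots> = lam * nrm V f" unfolding nrm_def by (simp add: sum_distrib_left)
    finally have "lam * nrm V f \<le> R * nrm V f" using R by metis
    moreover have "nrm V f \<noteq> 0" using f(1) nrm_zero[OF fin] by blast
    ultimately show ?thesis using nrm_nonneg[of V f] by (simp add: mult_le_cancel_right)
  qed
  have "Max {lam. is_eigenvalue_on V M lam} = R"
    using eig_finite[OF fin] eR le by (intro Max_eqI) auto
  then show ?thesis using R z0 by blast
qed


lemma walk_single[simp]: "walk V E [x] \<longleftrightarrow> x \<in> V"
  unfolding walk_def by auto

lemma walk_Cons2[simp]: "walk V E (x # y # xs) \<longleftrightarrow> x \<in> V \<and> {x, y} \<in> E \<and> walk V E (y # xs)"
proof
  assume h: "walk V E (x # y # xs)"
  have all: "\<forall>i. Suc i < length (x # y # xs) \<longrightarrow> {(x # y # xs) ! i, (x # y # xs) ! Suc i} \<in> E"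
    using h unfolding walk_def by blast
  have "{(x # y # xs) ! 0, (x # y # xs) ! Suc 0} \<in> E" by (rule all[rule_format]) simp
  then have "{x,y} \<in> E" by simp
  moreover have "walk V E (y # xs)" unfolding walk_def
  proof (intro conjI allI impI)
    show "y # xs \<noteq> []" by simp
    show "set (y # xs) \<subseteq> V" using h unfolding walk_def by auto
    fix i assume "Suc i < length (y # xs)"
    then have "Suc (Suc i) < length (x # y # xs)" by simp
    then have "{(x # y # xs) ! Suc i, (x # y # xs) ! Suc (Suc i)} \<in> E" by (rule all[rule_format])
    then show "{(y # xs) ! i, (y # xs) ! Suc i} \<in> E" by simp
  qed
  ultimately show "x \<in> V \<and> {x, y} \<in> E \<and> walk V E (y # xs)" using h unfolding walk_def by auto
next
  assume h: "x \<in> V \<and> {x, y} \<in> E \<and> walk V E (y # xs)"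
  show "walk V E (x # y # xs)" unfolding walk_def
  proof (intro conjI allI impI)
    fix i assume i: "Suc i < length (x # y # xs)"
    show "{(x # y # xs) ! i, (x # y # xs) ! Suc i} \<in> E"
    proof (cases i)
      case 0 then show ?thesis using h by simp
    next
      case (Suc j) then show ?thesis using h i unfolding walk_def by auto
    qed
  qed (use h in \<open>auto simp: walk_def\<close>)
qed

lemma walk_Nil[simp]: "\<not> walk V E []" unfolding walk_def by simp

lemma walk_set: "walk V E xs \<Longrightarrow> set xs \<subseteq> V"
  unfolding walk_def by auto

lemma walk_join:
  "walk V E xs \<Longrightarrow> walk V E ys \<Longrightarrow> last xs = hd ys \<Longrightarrow> walk V E (xs @ tl ys)"
proof (induction xs rule: induct_list012)
  case 1 then show ?case by simp
next
  case (2 x) then show ?case by (cases ys) auto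
next
  case (3 x y zs)
  then show ?case by auto
qed

lemma walk_rev: "walk V E xs \<Longrightarrow> walk V E (rev xs)"
proof (induction xs rule: induct_list012)
  case 1 then show ?case by simp
next
  case (2 x) then show ?case by simp
next
  case (3 x y zs)
  then have "walk V E (rev (y # zs))" by auto
  moreover have "walk V E [y, x]" using 3 walk_set[of V E "y # zs"] by (auto simp: insert_commute)
  ultimately have "walk V E (rev (y # zs) @ tl [y, x])" by (intro walk_join) auto
  then show ?case by simp
qed

lemma walk_snoc: "walk V E xs \<Longrightarrow> {last xs, y} \<in> E \<Longrightarrow> y \<in> V \<Longrightarrow> walk V E (xs @ [y])"
  using walk_join[of V E xs "[last xs, y]"] walk_set[of V E xs]
  by (metis (no_types, lifting) append_Cons append_Nil last_in_set list.sel(3) subsetD walk_Cons2 walk_Nil walk_single list.sel(1))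

lemma walk_edge: "walk V E xs \<Longrightarrow> Suc i < length xs \<Longrightarrow> {xs ! i, xs ! Suc i} \<in> E"
  unfolding walk_def by auto


definition reach where "reach V E a b \<longleftrightarrow> (\<exists>xs. walk V E xs \<and> hd xs = a \<and> last xs = b)"

lemma dist_le: assumes "walk V E xs" "hd xs = a" "last xs = b" shows "dist_G V E a b \<le> length xs - 1"
  unfolding dist_G_def
proof (rule Least_le)
  have "xs \<noteq> []" using assms(1) by auto
  then have "length xs = Suc (length xs - 1)" by simp
  then show "\<exists>ys. walk V E ys \<and> hd ys = a \<and> last ys = b \<and> length ys = Suc (length xs - 1)"
    using assms by blast
qed

lemma dist_ex: assumes "reach V E a b"
  shows "\<exists>xs. walk V E xs \<and> hd xs = a \<and> last xs = b \<and> length xs = Suc (dist_G V E a b)"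
proof -
  from assms obtain xs where "walk V E xs" "hd xs = a" "last xs = b" unfolding reach_def by auto
  then have "\<exists>n xs. walk V E xs \<and> hd xs = a \<and> last xs = b \<and> length xs = Suc n"
    by (intro exI[of _ "length xs - 1"] exI[of _ xs]) (cases xs, auto)
  then show ?thesis unfolding dist_G_def by (rule LeastI_ex)
qed

lemma dist_ge1: assumes "reach V E a b" "a \<noteq> b" shows "dist_G V E a b \<ge> 1"
proof (rule ccontr)
  assume "\<not> ?thesis"
  then have "dist_G V E a b = 0" by simp
  with dist_ex[OF assms(1)] obtain xs where "length xs = 1" "hd xs = a" "last xs = b" by auto
  then show False using assms(2) by (cases xs) auto
qed

lemma dist_ge2: assumes "reach V E a b" "a \<noteq> b" "{a,b} \<notin> E" shows "dist_G V E a b \<ge> 2"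
proof (rule ccontr)
  assume "\<not> ?thesis"
  then have d: "dist_G V E a b \<le> 1" by simp
  with dist_ex[OF assms(1)] obtain xs where xs: "walk V E xs" "length xs \<le> 2" "hd xs = a" "last xs = b" by auto
  show False
  proof (cases xs)
    case Nil then show ?thesis using xs by simp
  next
    case (Cons x ys)
    then show ?thesis
    proof (cases ys)
      case Nil then show ?thesis using xs Cons assms by simp
    next
      case (Cons y zs) then show ?thesis using xs \<open>xs = x # ys\<close> assms by auto
    qed
  qed
qed

lemma dist_sym: "dist_G V E a b = dist_G V E b a"
proof -
  have "(\<exists>xs. walk V E xs \<and> hd xs = a \<and> last xs = b \<and> length xs = Suc n) \<longleftrightarrow>
        (\<exists>xs. walk V E xs \<and> hd xs = b \<and> last xs = a \<and> length xs = Suc n)" for a b n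
  proof
    assume "\<exists>xs. walk V E xs \<and> hd xs = a \<and> last xs = b \<and> length xs = Suc n"
    then obtain xs where "walk V E xs" "hd xs = a" "last xs = b" "length xs = Suc n" by blast
    then show "\<exists>xs. walk V E xs \<and> hd xs = b \<and> last xs = a \<and> length xs = Suc n"
      by (intro exI[of _ "rev xs"]) (auto simp: walk_rev hd_rev last_rev)
  next
    assume "\<exists>xs. walk V E xs \<and> hd xs = b \<and> last xs = a \<and> length xs = Suc n"
    then obtain xs where "walk V E xs" "hd xs = b" "last xs = a" "length xs = Suc n" by blast
    then show "\<exists>xs. walk V E xs \<and> hd xs = a \<and> last xs = b \<and> length xs = Suc n"
      by (intro exI[of _ "rev xs"]) (auto simp: walk_rev hd_rev last_rev)
  qed
  then show ?thesis unfolding dist_G_def by simp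
qed

lemma dist_self: "a \<in> V \<Longrightarrow> dist_G V E a a = 0"
  using dist_le[of V E "[a]" a a] by simp

lemma hub_walk:
  assumes p: "p \<in> V" and q: "q \<in> V" and pq: "p = q \<or> {p,q} \<in> Ed"
    and hub: "\<forall>a\<in>V. a = p \<or> a = q \<or> {a,p} \<in> Ed \<or> {a,q} \<in> Ed"
    and a: "a \<in> V" and b: "b \<in> V"
  shows "\<exists>xs. walk V Ed xs \<and> hd xs = a \<and> last xs = b \<and> length xs \<le> 4"
proof -
  have h: "\<exists>h ys. (h = p \<or> h = q) \<and> walk V Ed ys \<and> hd ys = c \<and> last ys = h \<and> length ys \<le> 2" if "c \<in> V" for c
  proof -
    from hub that consider "c = p" | "c = q" | "{c,p} \<in> Ed" | "{c,q} \<in> Ed" by blast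
    then show ?thesis
    proof cases
      case 1 then show ?thesis using that by (intro exI[of _ c] exI[of _ "[c]"]) auto
    next
      case 2 then show ?thesis using that by (intro exI[of _ c] exI[of _ "[c]"]) auto
    next
      case 3 then show ?thesis using that p by (intro exI[of _ p] exI[of _ "[c,p]"]) auto
    next
      case 4 then show ?thesis using that q by (intro exI[of _ q] exI[of _ "[c,q]"]) auto
    qed
  qed
  obtain ha ys where ys: "ha = p \<or> ha = q" "walk V Ed ys" "hd ys = a" "last ys = ha" "length ys \<le> 2"
    using h[OF a] by blast
  obtain hb zs where zs: "hb = p \<or> hb = q" "walk V Ed zs" "hd zs = b" "last zs = hb" "length zs \<le> 2"
    using h[OF b] by blast
  have "\<exists>ms. walk V Ed ms \<and> hd ms = ha \<and> last ms = hb \<and> length ms \<le> 2"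
  proof (cases "ha = hb")
    case True then show ?thesis using ys zs p q by (intro exI[of _ "[ha]"]) auto
  next
    case False
    then have "{ha, hb} \<in> Ed" using ys(1) zs(1) pq by (auto simp: insert_commute)
    then show ?thesis using ys zs p q by (intro exI[of _ "[ha, hb]"]) auto
  qed
  then obtain ms where ms: "walk V Ed ms" "hd ms = ha" "last ms = hb" "length ms \<le> 2" by blast
  define zs' where "zs' = rev zs"
  have zs': "walk V Ed zs'" "hd zs' = hb" "last zs' = b" "length zs' \<le> 2"
    using zs walk_rev unfolding zs'_def by (auto simp: hd_rev last_rev)
  have ne: "ys \<noteq> []" "ms \<noteq> []" "zs' \<noteq> []" using ys ms zs' walk_Nil by metis+
  have w1: "walk V Ed (ys @ tl ms)" using walk_join[OF ys(2) ms(1)] ys(4) ms(2) by simp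
  have w2: "walk V Ed ((ys @ tl ms) @ tl zs')"
    using walk_join[OF w1 zs'(1)] ne ms zs' ys by (cases ms) auto
  show ?thesis
    apply (intro exI[of _ "(ys @ tl ms) @ tl zs'"])
    using w2 ne ys ms zs' by (cases zs'; cases ms; auto)
qed


definition adjL :: "'a list \<Rightarrow> 'a \<Rightarrow> 'a \<Rightarrow> bool" where
  "adjL P c d \<longleftrightarrow> (\<exists>i. Suc i < length P \<and> {c, d} = {P ! i, P ! Suc i})"

lemma adjL_rev: "adjL (rev P) c d \<longleftrightarrow> adjL P c d"
proof
  assume "adjL (rev P) c d"
  then obtain i where i: "Suc i < length P" "{c,d} = {rev P ! i, rev P ! Suc i}" unfolding adjL_def by auto
  define j where "j = length P - Suc (Suc i)"
  have "Suc j < length P" "rev P ! i = P ! Suc j" "rev P ! Suc i = P ! j"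
    using i(1) unfolding j_def by (auto simp: rev_nth Suc_diff_Suc)
  then show "adjL P c d" unfolding adjL_def using i(2) by (intro exI[of _ j]) (auto simp: insert_commute)
next
  assume "adjL P c d"
  then obtain i where i: "Suc i < length P" "{c,d} = {P ! i, P ! Suc i}" unfolding adjL_def by auto
  define j where "j = length P - Suc (Suc i)"
  have "Suc j < length P" "rev P ! j = P ! Suc i" "rev P ! Suc j = P ! i"
    using i(1) unfolding j_def by (auto simp: rev_nth Suc_diff_Suc)
  then show "adjL (rev P) c d" unfolding adjL_def using i(2) by (intro exI[of _ j]) (auto simp: insert_commute)
qed

lemma adjL_sym: "adjL P c d \<longleftrightarrow> adjL P d c"
  unfolding adjL_def by (simp add: insert_commute)

locale pth =
  fixes V :: "'a set" and E :: "'a set set" and P :: "'a list"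
  assumes tree: "is_tree V E" and Pw: "walk V E P" and Pd: "distinct P" and Pl: "length P \<ge> 2"
    and Pdeg: "\<forall>i. 0 < i \<and> i < length P - 1 \<longrightarrow> Defs.degree V E (P ! i) = 2"
begin

definition "pu = hd P"
definition "pv = last P"
definition "pw = P ! (length P - 2)"
definition "Xs = neighbors V E pv - {pw}"
definition "As = neighbors V E pu - {P ! 1}"
definition "ES = (E - {{pv, x} | x. x \<in> Xs}) \<union> {{pu, x} | x. x \<in> Xs}"

lemma fin: "finite V" using tree unfolding is_tree_def simple_graph_def by auto

lemma edge_in: assumes "{a,b} \<in> E" shows "a \<in> V" "b \<in> V" "a \<noteq> b"
proof -
  have "E \<subseteq> {{x, y} | x y. x \<in> V \<and> y \<in> V \<and> x \<noteq> y}" using tree unfolding is_tree_def simple_graph_def by auto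
  with assms obtain x y where "{a,b} = {x,y}" "x \<in> V" "y \<in> V" "x \<noteq> y" by blast
  then show "a \<in> V" "b \<in> V" "a \<noteq> b" by (auto simp: doubleton_eq_iff)
qed

lemma noloop: "{a} \<notin> E" using edge_in[of a a] by auto

lemma nocyc: "\<not> is_cycle V E xs" using tree unfolding is_tree_def by auto

lemma Pset: "set P \<subseteq> V" using Pw walk_set by auto

lemma Pedge: "Suc i < length P \<Longrightarrow> {P ! i, P ! Suc i} \<in> E" using walk_edge[OF Pw] by auto

lemma P_ne[simp]: "P \<noteq> []" using Pl by (cases P) auto

lemma pu_nth: "pu = P ! 0" unfolding pu_def using Pl by (cases P) auto
lemma pv_nth: "pv = P ! (length P - 1)" unfolding pv_def using P_ne by (simp add: last_conv_nth)

lemma nth_inj: "i < length P \<Longrightarrow> j < length P \<Longrightarrow> P ! i = P ! j \<longleftrightarrow> i = j"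
  using Pd by (simp add: nth_eq_iff_index_eq)

lemma pu_ne_pv: "pu \<noteq> pv"
proof -
  have "0 < length P" "length P - 1 < length P" "0 \<noteq> length P - 1" using Pl by auto
  then show ?thesis using nth_inj[of 0 "length P - 1"] unfolding pu_nth pv_nth by metis
qed

lemma nbr_fin: "finite (neighbors V E x)" unfolding neighbors_def using fin by auto

lemma int_nbr:
  assumes i: "0 < i" "i < length P - 1" and e: "{P ! i, b} \<in> E"
  shows "b = P ! (i - 1) \<or> b = P ! Suc i"
proof (rule ccontr)
  assume nb: "\<not> ?thesis"
  have e1: "{P ! i, P ! (i - 1)} \<in> E" using Pedge[of "i - 1"] i by (simp add: insert_commute)
  have e2: "{P ! i, P ! Suc i} \<in> E" using Pedge[of i] i by simp
  have "{P ! (i - 1), P ! Suc i, b} \<subseteq> neighbors V E (P ! i)"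
    unfolding neighbors_def using e e1 e2 edge_in by auto
  moreover have "card {P ! (i - 1), P ! Suc i, b} = 3"
    using nb nth_inj[of "i - 1" "Suc i"] i by auto
  ultimately have "3 \<le> Defs.degree V E (P ! i)" unfolding Defs.degree_def using card_mono[OF nbr_fin] by metis
  then show False using Pdeg i by auto
qed

lemma chord_lt:
  assumes ij: "i < j" "j < length P" and e: "{P ! i, P ! j} \<in> E"
  shows "j = Suc i"
proof (cases "0 < i")
  case True
  have "i < length P - 1" using ij by linarith
  then have "P ! j = P ! (i - 1) \<or> P ! j = P ! Suc i" using int_nbr[OF True _ e] by blast
  moreover have "P ! j \<noteq> P ! (i - 1)" using nth_inj[of j "i - 1"] ij by simp
  ultimately have "P ! j = P ! Suc i" by blast
  then show ?thesis using nth_inj[of j "Suc i"] ij by simp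
next
  case False
  then have i0: "i = 0" by simp
  show ?thesis
  proof (cases "j < length P - 1")
    case True
    have "{P ! j, P ! 0} \<in> E" using e i0 by (simp add: insert_commute)
    moreover have "0 < j" using ij i0 by simp
    ultimately have "P ! 0 = P ! (j - 1) \<or> P ! 0 = P ! Suc j" using int_nbr[of j "P ! 0"] True by blast
    moreover have "P ! 0 \<noteq> P ! Suc j" using nth_inj[of 0 "Suc j"] True P_ne by simp
    ultimately have "P ! 0 = P ! (j - 1)" by blast
    then have "0 = j - 1" using nth_inj[of 0 "j - 1"] ij by simp
    then show ?thesis using \<open>0 < j\<close> i0 by simp
  next
    case False
    then have j: "j = length P - 1" using ij by linarith
    show ?thesis
    proof (rule ccontr)
      assume "j \<noteq> Suc i"
      then have "length P \<ge> 3" using j i0 Pl by linarith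
      moreover have "{last P, hd P} \<in> E"
      proof -
        have "{P ! j, P ! 0} \<in> E" using e i0 by (simp add: insert_commute)
        then show ?thesis using j pu_nth pv_nth unfolding pu_def pv_def by simp
      qed
      ultimately have "is_cycle V E P" unfolding is_cycle_def using Pw Pd by simp
      then show False using nocyc by blast
    qed
  qed
qed

lemma chord:
  assumes "i < length P" "j < length P" "{P ! i, P ! j} \<in> E"
  shows "i = Suc j \<or> j = Suc i"
proof -
  have "i \<noteq> j" using assms(3) noloop by auto
  then consider "i < j" | "j < i" by linarith
  then show ?thesis
  proof cases
    case 1 then show ?thesis using chord_lt assms by auto
  next
    case 2 then show ?thesis using chord_lt[of j i] assms by (auto simp: insert_commute)
  qed
qed

lemma Xs_out: assumes "x \<in> Xs" shows "x \<notin> set P"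
proof
  assume "x \<in> set P"
  then obtain i where i: "i < length P" "x = P ! i" by (auto simp: in_set_conv_nth)
  have "{P ! (length P - 1), P ! i} \<in> E" using assms i unfolding Xs_def neighbors_def pv_nth by auto
  then have "length P - 1 = Suc i \<or> i = Suc (length P - 1)" using chord[of "length P - 1" i] i Pl by auto
  then have "i = length P - 2" using i by auto
  then show False using assms i unfolding Xs_def pw_def by auto
qed

lemma As_out: assumes "x \<in> As" shows "x \<notin> set P"
proof
  assume "x \<in> set P"
  then obtain i where i: "i < length P" "x = P ! i" by (auto simp: in_set_conv_nth)
  have "{P ! 0, P ! i} \<in> E" using assms i unfolding As_def neighbors_def pu_nth by auto
  moreover have "0 < length P" using P_ne by simp
  ultimately have "0 = Suc i \<or> i = Suc 0" using chord[of 0 i] i by blast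
  then have "i = 1" by auto
  then show False using assms i unfolding As_def by auto
qed

lemma Xs_edge: "x \<in> Xs \<Longrightarrow> {pv, x} \<in> E" unfolding Xs_def neighbors_def by auto
lemma As_edge: "x \<in> As \<Longrightarrow> {pu, x} \<in> E" unfolding As_def neighbors_def by auto
lemma Xs_V: "Xs \<subseteq> V" unfolding Xs_def neighbors_def by auto
lemma As_V: "As \<subseteq> V" unfolding As_def neighbors_def by auto

lemma pu_P: "pu \<in> set P" unfolding pu_def using Pl by (cases P) auto
lemma pv_P: "pv \<in> set P" unfolding pv_def using Pl by (cases P) auto

lemma F2: assumes "x \<in> Xs" shows "{pu, x} \<notin> E"
proof
  assume e: "{pu, x} \<in> E"
  have "walk V E (P @ [x])" using walk_snoc[OF Pw] Xs_edge[OF assms] Xs_V assms unfolding pv_def by auto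
  moreover have "distinct (P @ [x])" using Pd Xs_out[OF assms] by auto
  moreover have "length (P @ [x]) \<ge> 3" using Pl by auto
  moreover have "{last (P @ [x]), hd (P @ [x])} \<in> E" using e Pl unfolding pu_def
    by (cases P) (auto simp: insert_commute)
  ultimately have "is_cycle V E (P @ [x])" unfolding is_cycle_def by auto
  then show False using nocyc by auto
qed

lemma nbr_out:
  assumes c: "c \<in> set P" and d: "d \<notin> set P" and e: "{c, d} \<in> E"
  shows "(c = pu \<and> d \<in> As) \<or> (c = pv \<and> d \<in> Xs)"
proof -
  obtain i where i: "i < length P" "c = P ! i" using c by (auto simp: in_set_conv_nth)
  have dV: "d \<in> V" using edge_in e by auto
  consider "i = 0" | "i = length P - 1" | "0 < i \<and> i < length P - 1" using i by linarith
  then show ?thesis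
  proof cases
    case 1
    have "P ! 1 \<in> set P" using Pl by auto
    then have "d \<in> As" unfolding As_def neighbors_def using e dV d i 1 pu_nth by auto
    then show ?thesis using 1 i pu_nth by auto
  next
    case 2
    have "pw \<in> set P" unfolding pw_def using Pl by auto
    then have "d \<in> Xs" unfolding Xs_def neighbors_def using e dV d i 2 pv_nth by auto
    then show ?thesis using 2 i pv_nth by auto
  next
    case 3
    then have "d = P ! (i - 1) \<or> d = P ! Suc i" using int_nbr e i by auto
    then have "d \<in> set P" using 3 by auto
    then show ?thesis using d by auto
  qed
qed

lemma P_adj: "c \<in> set P \<Longrightarrow> d \<in> set P \<Longrightarrow> {c, d} \<in> E \<longleftrightarrow> adjL P c d"
proof
  assume c: "c \<in> set P" and d: "d \<in> set P" and e: "{c,d} \<in> E"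
  obtain i where i: "i < length P" "c = P ! i" using c by (auto simp: in_set_conv_nth)
  obtain j where j: "j < length P" "d = P ! j" using d by (auto simp: in_set_conv_nth)
  have "i = Suc j \<or> j = Suc i" using chord i j e by auto
  then show "adjL P c d" unfolding adjL_def using i j by (auto simp: insert_commute)
next
  assume "adjL P c d"
  then show "{c,d} \<in> E" unfolding adjL_def using Pedge by auto
qed

lemma E_char:
  assumes "c \<in> V" "d \<in> V"
  shows "{c, d} \<in> E \<longleftrightarrow> (c \<notin> set P \<and> d \<notin> set P \<and> {c, d} \<in> E) \<or> (c \<in> set P \<and> d \<in> set P \<and> adjL P c d)
     \<or> (c = pu \<and> d \<in> As) \<or> (d = pu \<and> c \<in> As) \<or> (c = pv \<and> d \<in> Xs) \<or> (d = pv \<and> c \<in> Xs)"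
proof
  assume e: "{c, d} \<in> E"
  have e': "{d, c} \<in> E" using e by (simp add: insert_commute)
  show "(c \<notin> set P \<and> d \<notin> set P \<and> {c, d} \<in> E) \<or> (c \<in> set P \<and> d \<in> set P \<and> adjL P c d)
     \<or> (c = pu \<and> d \<in> As) \<or> (d = pu \<and> c \<in> As) \<or> (c = pv \<and> d \<in> Xs) \<or> (d = pv \<and> c \<in> Xs)"
  proof (cases "c \<in> set P")
    case True
    show ?thesis
    proof (cases "d \<in> set P")
      case True
      then show ?thesis using P_adj[of c d] \<open>c \<in> set P\<close> e by simp
    next
      case False
      then have "(c = pu \<and> d \<in> As) \<or> (c = pv \<and> d \<in> Xs)" using nbr_out[OF \<open>c \<in> set P\<close> False e] by simp
      then show ?thesis by blast
    qed
  next
    case False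
    show ?thesis
    proof (cases "d \<in> set P")
      case True
      then have "(d = pu \<and> c \<in> As) \<or> (d = pv \<and> c \<in> Xs)" using nbr_out[OF True False e'] by simp
      then show ?thesis by blast
    next
      case False
      then show ?thesis using \<open>c \<notin> set P\<close> e by simp
    qed
  qed
next
  assume "(c \<notin> set P \<and> d \<notin> set P \<and> {c, d} \<in> E) \<or> (c \<in> set P \<and> d \<in> set P \<and> adjL P c d)
     \<or> (c = pu \<and> d \<in> As) \<or> (d = pu \<and> c \<in> As) \<or> (c = pv \<and> d \<in> Xs) \<or> (d = pv \<and> c \<in> Xs)"
  then show "{c, d} \<in> E"
  proof (elim disjE)
    assume "d = pu \<and> c \<in> As"
    then show ?thesis using As_edge[of c] by (simp add: insert_commute)
  next
    assume "d = pv \<and> c \<in> Xs"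
    then show ?thesis using Xs_edge[of c] by (simp add: insert_commute)
  next
    assume "c \<notin> set P \<and> d \<notin> set P \<and> {c, d} \<in> E" then show ?thesis by simp
  next
    assume "c \<in> set P \<and> d \<in> set P \<and> adjL P c d" then show ?thesis using P_adj by simp
  next
    assume "c = pu \<and> d \<in> As" then show ?thesis using As_edge by simp
  next
    assume "c = pv \<and> d \<in> Xs" then show ?thesis using Xs_edge by simp
  qed
qed

lemma pu_notin_Xs: "pu \<notin> Xs" using Xs_out pu_P by auto
lemma pv_notin_Xs: "pv \<notin> Xs" using Xs_out pv_P by auto
lemma pu_notin_As: "pu \<notin> As" using As_out pu_P by auto
lemma pv_notin_As: "pv \<notin> As" using As_out pv_P by auto

lemma ES_mem: "{c, d} \<in> ES \<longleftrightarrow> ({c, d} \<in> E \<and> \<not> (\<exists>x\<in>Xs. {c, d} = {pv, x})) \<or> (\<exists>x\<in>Xs. {c, d} = {pu, x})"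
proof -
  have "{c, d} \<in> {{pv, x} | x. x \<in> Xs} \<longleftrightarrow> (\<exists>x\<in>Xs. {c, d} = {pv, x})" by blast
  moreover have "{c, d} \<in> {{pu, x} | x. x \<in> Xs} \<longleftrightarrow> (\<exists>x\<in>Xs. {c, d} = {pu, x})" by blast
  ultimately show ?thesis unfolding ES_def by simp
qed

lemma ES_char:
  assumes cV: "c \<in> V" and dV: "d \<in> V"
  shows "{c, d} \<in> ES \<longleftrightarrow> (c \<notin> set P \<and> d \<notin> set P \<and> {c, d} \<in> E) \<or> (c \<in> set P \<and> d \<in> set P \<and> adjL P c d)
     \<or> (c = pu \<and> d \<in> As \<union> Xs) \<or> (d = pu \<and> c \<in> As \<union> Xs)"
proof -
  have rv: "(\<exists>x\<in>Xs. {c, d} = {pv, x}) \<longleftrightarrow> (c = pv \<and> d \<in> Xs) \<or> (d = pv \<and> c \<in> Xs)"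
    by (auto simp: doubleton_eq_iff)
  have ru: "(\<exists>x\<in>Xs. {c, d} = {pu, x}) \<longleftrightarrow> (c = pu \<and> d \<in> Xs) \<or> (d = pu \<and> c \<in> Xs)"
    by (auto simp: doubleton_eq_iff)
  have n1: "\<not> ((c = pv \<and> d \<in> Xs) \<or> (d = pv \<and> c \<in> Xs))"
    if "(c \<notin> set P \<and> d \<notin> set P \<and> {c, d} \<in> E) \<or> (c \<in> set P \<and> d \<in> set P \<and> adjL P c d)
     \<or> (c = pu \<and> d \<in> As) \<or> (d = pu \<and> c \<in> As)"
    using that pv_P Xs_out pu_ne_pv pv_notin_As pu_notin_Xs by (elim disjE) auto
  have e1: "{c, d} \<in> ES \<longleftrightarrow> ({c, d} \<in> E \<and> \<not> ((c = pv \<and> d \<in> Xs) \<or> (d = pv \<and> c \<in> Xs)))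
      \<or> ((c = pu \<and> d \<in> Xs) \<or> (d = pu \<and> c \<in> Xs))"
    using ES_mem[of c d] unfolding rv ru .
  have ec: "{c, d} \<in> E \<longleftrightarrow> (c \<notin> set P \<and> d \<notin> set P \<and> {c, d} \<in> E) \<or> (c \<in> set P \<and> d \<in> set P \<and> adjL P c d)
     \<or> (c = pu \<and> d \<in> As) \<or> (d = pu \<and> c \<in> As) \<or> ((c = pv \<and> d \<in> Xs) \<or> (d = pv \<and> c \<in> Xs))"
    using E_char[OF cV dV] by simp
  show ?thesis
  proof
    assume "{c, d} \<in> ES"
    then consider "{c, d} \<in> E" "\<not> ((c = pv \<and> d \<in> Xs) \<or> (d = pv \<and> c \<in> Xs))"
      | "(c = pu \<and> d \<in> Xs) \<or> (d = pu \<and> c \<in> Xs)" unfolding e1 by blast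
    then show "(c \<notin> set P \<and> d \<notin> set P \<and> {c, d} \<in> E) \<or> (c \<in> set P \<and> d \<in> set P \<and> adjL P c d)
     \<or> (c = pu \<and> d \<in> As \<union> Xs) \<or> (d = pu \<and> c \<in> As \<union> Xs)"
    proof cases
      case 1
      then have "(c \<notin> set P \<and> d \<notin> set P \<and> {c, d} \<in> E) \<or> (c \<in> set P \<and> d \<in> set P \<and> adjL P c d)
        \<or> (c = pu \<and> d \<in> As) \<or> (d = pu \<and> c \<in> As)" using ec by blast
      then show ?thesis by blast
    next
      case 2 then show ?thesis by blast
    qed
  next
    assume "(c \<notin> set P \<and> d \<notin> set P \<and> {c, d} \<in> E) \<or> (c \<in> set P \<and> d \<in> set P \<and> adjL P c d)
     \<or> (c = pu \<and> d \<in> As \<union> Xs) \<or> (d = pu \<and> c \<in> As \<union> Xs)"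
    then consider "(c \<notin> set P \<and> d \<notin> set P \<and> {c, d} \<in> E) \<or> (c \<in> set P \<and> d \<in> set P \<and> adjL P c d)
        \<or> (c = pu \<and> d \<in> As) \<or> (d = pu \<and> c \<in> As)" | "(c = pu \<and> d \<in> Xs) \<or> (d = pu \<and> c \<in> Xs)"
      by blast
    then show "{c, d} \<in> ES"
    proof cases
      case 1
      then have "{c, d} \<in> E" using ec by blast
      then show ?thesis unfolding e1 using n1[OF 1] by blast
    next
      case 2 then show ?thesis unfolding e1 by blast
    qed
  qed
qed

lemma ES_noloop: "{a} \<notin> ES"
  using ES_mem[of a a] noloop pu_notin_Xs by (auto simp: doubleton_eq_iff)

lemma Xs_ne: assumes "\<not> pendant V E pv" shows "Xs \<noteq> {}"
proof
  assume "Xs = {}"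
  moreover have "pw \<in> neighbors V E pv"
  proof -
    have "{P ! (length P - 2), P ! Suc (length P - 2)} \<in> E" using Pedge[of "length P - 2"] Pl by auto
    moreover have "Suc (length P - 2) = length P - 1" using Pl by auto
    ultimately show ?thesis unfolding neighbors_def pw_def pv_nth using edge_in by (auto simp: insert_commute)
  qed
  ultimately have "neighbors V E pv = {pw}" unfolding Xs_def by auto
  then show False using assms unfolding pendant_def Defs.degree_def by auto
qed

lemma As_ne: assumes "\<not> pendant V E pu" shows "As \<noteq> {}"
proof
  assume "As = {}"
  moreover have "P ! 1 \<in> neighbors V E pu"
  proof -
    have "{P ! 0, P ! Suc 0} \<in> E" using Pedge[of 0] Pl by auto
    then show ?thesis unfolding neighbors_def pu_nth using edge_in by auto
  qed
  ultimately have "neighbors V E pu = {P ! 1}" unfolding As_def by auto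
  then show False using assms unfolding pendant_def Defs.degree_def by auto
qed

lemma rev_pth: "pth V E (rev P)"
proof
  show "is_tree V E" by (rule tree)
  show "walk V E (rev P)" using walk_rev[OF Pw] .
  show "distinct (rev P)" using Pd by simp
  show "2 \<le> length (rev P)" using Pl by simp
  show "\<forall>i. 0 < i \<and> i < length (rev P) - 1 \<longrightarrow> Defs.degree V E (rev P ! i) = 2"
  proof (intro allI impI)
    fix i assume i: "0 < i \<and> i < length (rev P) - 1"
    then have "i < length P" by auto
    then have r: "rev P ! i = P ! (length P - Suc i)" by (rule rev_nth)
    have "0 < length P - Suc i \<and> length P - Suc i < length P - 1" using i by auto
    then have "Defs.degree V E (P ! (length P - Suc i)) = 2" using Pdeg by blast
    then show "Defs.degree V E (rev P ! i) = 2" unfolding r .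
  qed
qed

end


definition Fq :: "'a set \<Rightarrow> 'a set set \<Rightarrow> ('a \<Rightarrow> real) \<Rightarrow> real" where
  "Fq V Ed z = (\<Sum>a\<in>V. \<Sum>b\<in>V. (if {a, b} \<in> Ed then (z a + z b)^2 else 0))"

lemma star_sum1:
  assumes "finite V" "c \<in> V" "Y \<subseteq> V"
  shows "(\<Sum>a\<in>V. \<Sum>b\<in>V. (if a = c \<and> b \<in> Y then g a b else (0::real))) = (\<Sum>b\<in>Y. g c b)"
proof -
  have "(\<Sum>a\<in>V. \<Sum>b\<in>V. (if a = c \<and> b \<in> Y then g a b else (0::real)))
      = (\<Sum>a\<in>V. if a = c then (\<Sum>b\<in>V. if b \<in> Y then g a b else 0) else 0)"
    by (intro sum.cong refl) auto
  also have "\<dots> = (\<Sum>b\<in>V. if b \<in> Y then g c b else 0)" using assms by simp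
  also have "\<dots> = (\<Sum>b\<in>V \<inter> Y. g c b)" using assms by (simp add: sum.inter_restrict)
  also have "V \<inter> Y = Y" using assms by auto
  finally show ?thesis .
qed

lemma star_sum2:
  assumes "finite V" "c \<in> V" "Y \<subseteq> V"
  shows "(\<Sum>a\<in>V. \<Sum>b\<in>V. (if b = c \<and> a \<in> Y then g a b else (0::real))) = (\<Sum>a\<in>Y. g a c)"
proof -
  have "(\<Sum>a\<in>V. \<Sum>b\<in>V. (if b = c \<and> a \<in> Y then g a b else (0::real)))
      = (\<Sum>a\<in>V. if a \<in> Y then g a c else 0)"
  proof (intro sum.cong refl)
    fix a assume "a \<in> V"
    have "(\<Sum>b\<in>V. (if b = c \<and> a \<in> Y then g a b else (0::real))) = (\<Sum>b\<in>V. if b = c then (if a \<in> Y then g a b else 0) else 0)"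
      by (intro sum.cong refl) auto
    also have "\<dots> = (if a \<in> Y then g a c else 0)" using assms by simp
    finally show "(\<Sum>b\<in>V. (if b = c \<and> a \<in> Y then g a b else (0::real))) = (if a \<in> Y then g a c else 0)" .
  qed
  also have "\<dots> = (\<Sum>a\<in>V \<inter> Y. g a c)" using assms by (simp add: sum.inter_restrict)
  also have "V \<inter> Y = Y" using assms by auto
  finally show ?thesis .
qed

context pth
begin

definition "sg c = (case map_of (zip P (rev P)) c of None \<Rightarrow> c | Some d \<Rightarrow> d)"

lemma sg_nth: "i < length P \<Longrightarrow> sg (P ! i) = P ! (length P - Suc i)"
  unfolding sg_def using map_of_zip_nth[of P "rev P" i] Pd by (simp add: rev_nth)

lemma sg_out: assumes "c \<notin> set P" shows "sg c = c"
proof -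
  have h: "map_of (zip P (rev P)) c = None" using map_of_zip_is_None[of P "rev P" c] assms by simp
  show ?thesis unfolding sg_def h by simp
qed

lemma sg_inP: assumes "c \<in> set P" shows "sg c \<in> set P"
proof -
  obtain i where i: "i < length P" "c = P ! i" using assms by (auto simp: in_set_conv_nth)
  then have "length P - Suc i < length P" by auto
  then show ?thesis using i sg_nth by simp
qed

lemma sg_inv: "sg (sg c) = c"
proof (cases "c \<in> set P")
  case True
  then obtain i where i: "i < length P" "c = P ! i" by (auto simp: in_set_conv_nth)
  have "length P - Suc i < length P" using i by auto
  then have "sg (sg c) = P ! (length P - Suc (length P - Suc i))" using i sg_nth by simp
  also have "length P - Suc (length P - Suc i) = i" using i by auto
  finally show ?thesis using i by simp
next
  case False then show ?thesis using sg_out by simp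
qed

lemma sg_P_iff: "sg c \<in> set P \<longleftrightarrow> c \<in> set P"
  using sg_inP sg_inv by metis

lemma sg_V: "c \<in> V \<Longrightarrow> sg c \<in> V"
  using sg_inP sg_out Pset by (cases "c \<in> set P") auto

lemma sg_pu: "sg pu = pv"
  using sg_nth[of 0] unfolding pu_nth pv_nth by simp

lemma sg_pv: "sg pv = pu"
  using sg_inv[of pu] sg_pu by simp

lemma sg_eq_iff: "sg c = sg d \<longleftrightarrow> c = d"
  using sg_inv by metis

lemma adj_sg: assumes "adjL P c d" shows "adjL P (sg c) (sg d)"
proof -
  obtain i where i: "Suc i < length P" "{c, d} = {P ! i, P ! Suc i}" using assms unfolding adjL_def by auto
  define j where "j = length P - Suc (Suc i)"
  have j: "Suc j < length P" "sg (P ! i) = P ! Suc j" "sg (P ! Suc i) = P ! j"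
    using i(1) sg_nth[of i] sg_nth[of "Suc i"] unfolding j_def by (auto simp: Suc_diff_Suc)
  have "{sg c, sg d} = {sg (P ! i), sg (P ! Suc i)}" using i(2) by (auto simp: doubleton_eq_iff)
  also have "\<dots> = {P ! j, P ! Suc j}" using j by (simp add: insert_commute)
  finally show ?thesis unfolding adjL_def using j(1) by blast
qed

lemma adj_sg_iff: "adjL P (sg c) (sg d) \<longleftrightarrow> adjL P c d"
  using adj_sg[of c d] adj_sg[of "sg c" "sg d"] sg_inv by metis

lemma r_pu: "pth.pu (rev P) = pv" unfolding pth.pu_def[OF rev_pth] pv_def using P_ne by (simp add: hd_rev)
lemma r_pv: "pth.pv (rev P) = pu" unfolding pth.pv_def[OF rev_pth] pu_def using P_ne by (simp add: last_rev)
lemma r_pw: "pth.pw (rev P) = P ! 1"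
proof -
  have "length P - 2 < length P" using Pl by auto
  then have "rev P ! (length P - 2) = P ! (length P - Suc (length P - 2))" by (rule rev_nth)
  also have "length P - Suc (length P - 2) = 1" using Pl by auto
  finally show ?thesis unfolding pth.pw_def[OF rev_pth] by simp
qed
lemma r_Xs: "pth.Xs V E (rev P) = As"
  unfolding pth.Xs_def[OF rev_pth] As_def r_pv r_pw ..
lemma r_As: "pth.As V E (rev P) = Xs"
proof -
  have "1 < length P" using Pl by auto
  then have "rev P ! 1 = P ! (length P - Suc 1)" by (rule rev_nth)
  moreover have "length P - Suc 1 = length P - 2" by simp
  ultimately have "rev P ! 1 = pw" unfolding pw_def by simp
  then show ?thesis unfolding pth.As_def[OF rev_pth] Xs_def r_pu by simp
qed

lemma E2_char:
  assumes cV: "c \<in> V" and dV: "d \<in> V"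
  shows "{c, d} \<in> pth.ES V E (rev P) \<longleftrightarrow> (c \<notin> set P \<and> d \<notin> set P \<and> {c, d} \<in> E) \<or> (c \<in> set P \<and> d \<in> set P \<and> adjL P c d)
     \<or> (c = pv \<and> d \<in> Xs \<union> As) \<or> (d = pv \<and> c \<in> Xs \<union> As)"
  using pth.ES_char[OF rev_pth cV dV] unfolding r_pu r_As r_Xs adjL_rev set_rev .

lemma sg_ES:
  assumes cV: "c \<in> V" and dV: "d \<in> V"
  shows "{sg c, sg d} \<in> ES \<longleftrightarrow> {c, d} \<in> pth.ES V E (rev P)"
proof -
  have d1: "(sg c \<notin> set P \<and> sg d \<notin> set P \<and> {sg c, sg d} \<in> E) \<longleftrightarrow> (c \<notin> set P \<and> d \<notin> set P \<and> {c, d} \<in> E)"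
    using sg_P_iff[of c] sg_P_iff[of d] sg_out[of c] sg_out[of d] by auto
  have d2: "(sg c \<in> set P \<and> sg d \<in> set P \<and> adjL P (sg c) (sg d)) \<longleftrightarrow> (c \<in> set P \<and> d \<in> set P \<and> adjL P c d)"
    using sg_P_iff[of c] sg_P_iff[of d] adj_sg_iff[of c d] by simp
  have d3: "sg c = pu \<longleftrightarrow> c = pv" using sg_pv sg_pu sg_inv[of c] by metis
  have d4: "sg d = pu \<longleftrightarrow> d = pv" using sg_pv sg_pu sg_inv[of d] by metis
  have d5: "sg x \<in> As \<union> Xs \<longleftrightarrow> x \<in> Xs \<union> As" for x
  proof (cases "x \<in> set P")
    case True
    then have "sg x \<in> set P" using sg_inP by simp
    then show ?thesis using True As_out Xs_out by blast
  next
    case False then show ?thesis using sg_out by auto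
  qed
  show ?thesis
    unfolding ES_char[OF sg_V[OF cV] sg_V[OF dV]] E2_char[OF cV dV] d1 d2 d3 d4 d5 ..
qed

lemma sum_sg: "(\<Sum>a\<in>V. g (sg a)) = (\<Sum>a\<in>V. (g a :: real))"
  by (rule sum.reindex_bij_witness[of V sg sg]) (auto simp: sg_inv sg_V)

lemma Fq_sg: "Fq V ES (\<lambda>a. z (sg a)) = Fq V (pth.ES V E (rev P)) z"
proof -
  define F where "F a b = (if {a, b} \<in> ES then (z (sg a) + z (sg b))^2 else 0)" for a b
  have "Fq V ES (\<lambda>a. z (sg a)) = (\<Sum>a\<in>V. \<Sum>b\<in>V. F a b)" unfolding Fq_def F_def ..
  also have "\<dots> = (\<Sum>a\<in>V. \<Sum>b\<in>V. F (sg a) b)" by (rule sum_sg[symmetric])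
  also have "\<dots> = (\<Sum>a\<in>V. \<Sum>b\<in>V. F (sg a) (sg b))"
    by (rule sum.cong[OF refl]) (rule sum_sg[symmetric])
  also have "\<dots> = Fq V (pth.ES V E (rev P)) z"
    unfolding Fq_def F_def sg_inv by (intro sum.cong refl) (simp add: sg_ES)
  finally show ?thesis .
qed

lemma ES_alt: "{c, d} \<in> ES \<longleftrightarrow> ({c, d} \<in> E \<and> \<not> ((c = pv \<and> d \<in> Xs) \<or> (d = pv \<and> c \<in> Xs)))
      \<or> ((c = pu \<and> d \<in> Xs) \<or> (d = pu \<and> c \<in> Xs))"
proof -
  have rv: "(\<exists>x\<in>Xs. {c, d} = {pv, x}) \<longleftrightarrow> (c = pv \<and> d \<in> Xs) \<or> (d = pv \<and> c \<in> Xs)"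
    by (auto simp: doubleton_eq_iff)
  have ru: "(\<exists>x\<in>Xs. {c, d} = {pu, x}) \<longleftrightarrow> (c = pu \<and> d \<in> Xs) \<or> (d = pu \<and> c \<in> Xs)"
    by (auto simp: doubleton_eq_iff)
  show ?thesis using ES_mem[of c d] unfolding rv ru .
qed

lemma ind_ES:
  fixes g :: real
  shows "(if {a, b} \<in> ES then g else 0) = (if {a, b} \<in> E then g else 0)
    - (if a = pv \<and> b \<in> Xs then g else 0) - (if b = pv \<and> a \<in> Xs then g else 0)
    + (if a = pu \<and> b \<in> Xs then g else 0) + (if b = pu \<and> a \<in> Xs then g else 0)"
proof -
  have x1: "a = pv \<and> b \<in> Xs \<Longrightarrow> {a, b} \<in> E" using Xs_edge by auto
  have x2: "b = pv \<and> a \<in> Xs \<Longrightarrow> {a, b} \<in> E" using Xs_edge[of a] by (auto simp: insert_commute)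
  have x3: "a = pu \<and> b \<in> Xs \<Longrightarrow> {a, b} \<notin> E" using F2 by auto
  have x4: "b = pu \<and> a \<in> Xs \<Longrightarrow> {a, b} \<notin> E" using F2[of a] by (auto simp: insert_commute)
  have x5: "\<not> (a = pv \<and> b \<in> Xs \<and> b = pv \<and> a \<in> Xs)" using pv_notin_Xs by auto
  have x6: "\<not> (a = pu \<and> b \<in> Xs \<and> b = pu \<and> a \<in> Xs)" using pu_notin_Xs by auto
  have pn: "pu \<noteq> pv" by (rule pu_ne_pv)
  have nx: "pu \<notin> Xs" "pv \<notin> Xs" by (rule pu_notin_Xs, rule pv_notin_Xs)
  consider (r1) "a = pv \<and> b \<in> Xs" | (r2) "b = pv \<and> a \<in> Xs" | (u1) "a = pu \<and> b \<in> Xs"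
    | (u2) "b = pu \<and> a \<in> Xs"
    | (no) "\<not> (a = pv \<and> b \<in> Xs)" "\<not> (b = pv \<and> a \<in> Xs)" "\<not> (a = pu \<and> b \<in> Xs)" "\<not> (b = pu \<and> a \<in> Xs)"
    by blast
  then show ?thesis
  proof cases
    case r1
    then have "{a, b} \<notin> ES" unfolding ES_alt using pn nx by auto
    then show ?thesis using r1 x1 pn nx by auto
  next
    case r2
    then have "{a, b} \<notin> ES" unfolding ES_alt using pn nx by auto
    then show ?thesis using r2 x2 pn nx by auto
  next
    case u1
    then have "{a, b} \<in> ES" unfolding ES_alt by auto
    then show ?thesis using u1 x3 pn nx by auto
  next
    case u2
    then have "{a, b} \<in> ES" unfolding ES_alt by auto
    then show ?thesis using u2 x4 pn nx by auto
  next
    case no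
    then have "{a, b} \<in> ES \<longleftrightarrow> {a, b} \<in> E" unfolding ES_alt by auto
    moreover have "(if a = pv \<and> b \<in> Xs then g else 0) = 0" using no(1) by (simp only: if_False)
    moreover have "(if b = pv \<and> a \<in> Xs then g else 0) = 0" using no(2) by (simp only: if_False)
    moreover have "(if a = pu \<and> b \<in> Xs then g else 0) = 0" using no(3) by (simp only: if_False)
    moreover have "(if b = pu \<and> a \<in> Xs then g else 0) = 0" using no(4) by (simp only: if_False)
    ultimately show ?thesis by simp
  qed
qed

lemma Fq_diff: "Fq V ES z = Fq V E z + 2 * (\<Sum>y\<in>Xs. (z pu + z y)^2 - (z pv + z y)^2)"
proof -
  let ?g = "\<lambda>a b. (z a + z b)^2"
  have "Fq V ES z = (\<Sum>a\<in>V. \<Sum>b\<in>V. (if {a, b} \<in> E then ?g a b else 0)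
    - (if a = pv \<and> b \<in> Xs then ?g a b else 0) - (if b = pv \<and> a \<in> Xs then ?g a b else 0)
    + (if a = pu \<and> b \<in> Xs then ?g a b else 0) + (if b = pu \<and> a \<in> Xs then ?g a b else 0))"
    unfolding Fq_def by (intro sum.cong refl) (rule ind_ES)
  also have "\<dots> = Fq V E z
    - (\<Sum>a\<in>V. \<Sum>b\<in>V. (if a = pv \<and> b \<in> Xs then ?g a b else 0))
    - (\<Sum>a\<in>V. \<Sum>b\<in>V. (if b = pv \<and> a \<in> Xs then ?g a b else 0))
    + (\<Sum>a\<in>V. \<Sum>b\<in>V. (if a = pu \<and> b \<in> Xs then ?g a b else 0))
    + (\<Sum>a\<in>V. \<Sum>b\<in>V. (if b = pu \<and> a \<in> Xs then ?g a b else 0))"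
    unfolding Fq_def by (simp only: sum.distrib sum_subtractf)
  also have "\<dots> = Fq V E z - (\<Sum>b\<in>Xs. ?g pv b) - (\<Sum>a\<in>Xs. ?g a pv) + (\<Sum>b\<in>Xs. ?g pu b) + (\<Sum>a\<in>Xs. ?g a pu)"
    using star_sum1[OF fin _ Xs_V] star_sum2[OF fin _ Xs_V] Pset pu_P pv_P by (simp add: subset_iff)
  also have "\<dots> = Fq V E z + 2 * (\<Sum>y\<in>Xs. (z pu + z y)^2 - (z pv + z y)^2)"
    by (simp add: sum_subtractf algebra_simps)
  finally show ?thesis .
qed

lemma row_diff:
  "(\<Sum>b\<in>V. ((if {pu, b} \<in> ES then 1 else 0) - (if {pu, b} \<in> E then 1 else 0)) * h b) = (\<Sum>b\<in>Xs. (h b :: real))"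
proof -
  have "(\<Sum>b\<in>V. ((if {pu, b} \<in> ES then 1 else 0) - (if {pu, b} \<in> E then 1 else 0)) * h b)
      = (\<Sum>b\<in>V. if b \<in> Xs then h b else 0)"
  proof (intro sum.cong refl)
    fix b assume "b \<in> V"
    have "(if {pu, b} \<in> ES then 1 else 0) - (if {pu, b} \<in> E then 1 else 0) = (if b \<in> Xs then 1 else (0::real))"
      using ind_ES[of pu b 1] pu_ne_pv pu_notin_Xs by simp
    then show "((if {pu, b} \<in> ES then 1 else 0) - (if {pu, b} \<in> E then 1 else 0)) * h b = (if b \<in> Xs then h b else 0)"
      by simp
  qed
  also have "\<dots> = (\<Sum>b\<in>V \<inter> Xs. h b)" using fin by (simp add: sum.inter_restrict)
  also have "V \<inter> Xs = Xs" using Xs_V by auto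
  finally show ?thesis .
qed

end


definition psi :: "'a set set \<Rightarrow> 'a \<Rightarrow> 'a \<Rightarrow> real" where
  "psi Ed a b = (if a = b then 0 else 1) + (if {a, b} \<in> Ed then 1 else 0)"

definition Mpsi :: "'a set \<Rightarrow> 'a set set \<Rightarrow> 'a \<Rightarrow> 'a \<Rightarrow> real" where
  "Mpsi V Ed a b = (if a = b then (\<Sum>c\<in>V. psi Ed a c) else 0) + psi Ed a b"

definition Oz :: "'a set \<Rightarrow> ('a \<Rightarrow> real) \<Rightarrow> real" where
  "Oz V z = (\<Sum>a\<in>V. \<Sum>b\<in>V. (if a = b then 0 else (z a + z b)^2))"

lemma psi_sym: "psi Ed a b = psi Ed b a"
  unfolding psi_def by (simp add: insert_commute eq_commute)

lemma psi_nonneg: "psi Ed a b \<ge> 0" unfolding psi_def by simp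

lemma Mpsi_ge1: assumes "finite V" "a \<in> V" "b \<in> V" "c \<in> V" "c \<noteq> a" shows "Mpsi V Ed a b \<ge> 1"
proof (cases "a = b")
  case True
  have "psi Ed a c \<le> (\<Sum>c\<in>V. psi Ed a c)"
    by (rule member_le_sum) (use assms psi_nonneg in auto)
  moreover have "psi Ed a c \<ge> 1" using assms unfolding psi_def by auto
  ultimately show ?thesis using True unfolding Mpsi_def psi_def by simp
next
  case False then show ?thesis unfolding Mpsi_def psi_def by simp
qed

lemma Mpsi_nonneg: "Mpsi V Ed a b \<ge> 0"
  unfolding Mpsi_def using psi_nonneg[of Ed] by (simp add: sum_nonneg)

lemma qf_Mpsi: assumes fin: "finite V" shows "2 * qf V (Mpsi V Ed) z = Oz V z + Fq V Ed z"
proof -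
  have s1: "(\<Sum>a\<in>V. \<Sum>b\<in>V. psi Ed a b * (z b)^2) = (\<Sum>a\<in>V. \<Sum>b\<in>V. psi Ed a b * (z a)^2)"
    apply (subst sum.swap)
    apply (intro sum.cong refl)
    by (simp add: psi_sym)
  have "qf V (Mpsi V Ed) z = (\<Sum>a\<in>V. \<Sum>b\<in>V. psi Ed a b * (z a)^2) + (\<Sum>a\<in>V. \<Sum>b\<in>V. psi Ed a b * z a * z b)"
  proof -
    have "qf V (Mpsi V Ed) z = (\<Sum>a\<in>V. (\<Sum>b\<in>V. (if a = b then (\<Sum>c\<in>V. psi Ed a c) * z a * z b else 0))
       + (\<Sum>b\<in>V. psi Ed a b * z a * z b))"
      unfolding qf_def sum.distrib[symmetric] by (intro sum.cong refl) (simp add: Mpsi_def distrib_right)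
    also have "\<dots> = (\<Sum>a\<in>V. (\<Sum>c\<in>V. psi Ed a c) * z a * z a + (\<Sum>b\<in>V. psi Ed a b * z a * z b))"
      using fin by (intro sum.cong refl) simp
    also have "\<dots> = (\<Sum>a\<in>V. \<Sum>b\<in>V. psi Ed a b * (z a)^2) + (\<Sum>a\<in>V. \<Sum>b\<in>V. psi Ed a b * z a * z b)"
      by (simp add: sum.distrib sum_distrib_right power2_eq_square mult.assoc)
    finally show ?thesis .
  qed
  moreover have "Oz V z + Fq V Ed z = (\<Sum>a\<in>V. \<Sum>b\<in>V. psi Ed a b * (z a + z b)^2)"
    unfolding Oz_def Fq_def sum.distrib[symmetric] by (intro sum.cong refl) (simp add: psi_def algebra_simps)
  moreover have "(\<Sum>a\<in>V. \<Sum>b\<in>V. psi Ed a b * (z a + z b)^2) = (\<Sum>a\<in>V. \<Sum>b\<in>V. psi Ed a b * (z a)^2)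
     + (\<Sum>a\<in>V. \<Sum>b\<in>V. psi Ed a b * (z b)^2) + 2 * (\<Sum>a\<in>V. \<Sum>b\<in>V. psi Ed a b * z a * z b)"
    by (simp add: sum.distrib[symmetric] sum_distrib_left power2_eq_square algebra_simps)
  ultimately show ?thesis using s1 by simp
qed

lemma mv_Mpsi: assumes "finite V" "a \<in> V"
  shows "mv V (Mpsi V Ed) z a = (\<Sum>b\<in>V. psi Ed a b * (z a + z b))"
proof -
  have "mv V (Mpsi V Ed) z a = (\<Sum>b\<in>V. (if a = b then (\<Sum>c\<in>V. psi Ed a c) * z b else 0)) + (\<Sum>b\<in>V. psi Ed a b * z b)"
    unfolding mv_def sum.distrib[symmetric] by (intro sum.cong refl) (simp add: Mpsi_def distrib_right)
  also have "\<dots> = (\<Sum>c\<in>V. psi Ed a c) * z a + (\<Sum>b\<in>V. psi Ed a b * z b)"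
    using assms by simp
  also have "\<dots> = (\<Sum>b\<in>V. psi Ed a b * (z a + z b))"
    by (simp add: sum.distrib sum_distrib_right sum_distrib_left algebra_simps)
  finally show ?thesis .
qed

lemma comp_mem: "{a, b} \<in> complement V Ed \<longleftrightarrow> a \<in> V \<and> b \<in> V \<and> a \<noteq> b \<and> {a, b} \<notin> Ed"
proof
  assume "{a, b} \<in> complement V Ed"
  then obtain x y where "{a, b} = {x, y}" "x \<in> V" "y \<in> V" "x \<noteq> y" "{x, y} \<notin> Ed"
    unfolding complement_def by blast
  moreover from this have "{a, b} \<notin> Ed" by simp
  ultimately show "a \<in> V \<and> b \<in> V \<and> a \<noteq> b \<and> {a, b} \<notin> Ed" by (auto simp: doubleton_eq_iff)
next
  assume "a \<in> V \<and> b \<in> V \<and> a \<noteq> b \<and> {a, b} \<notin> Ed"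
  then show "{a, b} \<in> complement V Ed" unfolding complement_def by blast
qed

lemma qf_mono:
  assumes "\<And>a b. a \<in> V \<Longrightarrow> b \<in> V \<Longrightarrow> M1 a b \<le> M2 a b" "\<And>a. a \<in> V \<Longrightarrow> z a \<ge> 0"
  shows "qf V M1 z \<le> qf V M2 z"
  unfolding qf_def using assms by (intro sum_mono mult_right_mono mult_right_mono) auto

lemma mv_mono:
  assumes "\<And>b. b \<in> V \<Longrightarrow> M1 a b \<le> M2 a b" "\<And>a. a \<in> V \<Longrightarrow> z a \<ge> 0"
  shows "mv V M1 z a \<le> mv V M2 z a"
  unfolding mv_def using assms by (intro sum_mono mult_right_mono) auto

lemma qf_cong2: "(\<And>a b. a \<in> V \<Longrightarrow> b \<in> V \<Longrightarrow> M1 a b = M2 a b) \<Longrightarrow> qf V M1 z = qf V M2 z"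
  unfolding qf_def by (intro sum.cong refl) auto

lemma eig_cong2: "(\<And>a b. a \<in> V \<Longrightarrow> b \<in> V \<Longrightarrow> M1 a b = M2 a b) \<Longrightarrow> is_eigenvalue_on V M1 = is_eigenvalue_on V M2"
  unfolding is_eigenvalue_on_def by (intro ext) (simp cong: sum.cong)


lemma diam_no_dom:
  assumes diam: "diameter_ge V E 4" and e: "{a, b} \<in> E" and a: "a \<in> V" and b: "b \<in> V"
  shows "\<exists>z\<in>V. z \<noteq> a \<and> z \<noteq> b \<and> {a, z} \<notin> E \<and> {b, z} \<notin> E"
proof (rule ccontr)
  assume neg: "\<not> ?thesis"
  have hub: "\<forall>c\<in>V. c = a \<or> c = b \<or> {c, a} \<in> E \<or> {c, b} \<in> E"
  proof
    fix c assume c: "c \<in> V"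
    show "c = a \<or> c = b \<or> {c, a} \<in> E \<or> {c, b} \<in> E"
    proof (cases "c = a \<or> c = b")
      case False
      then have "{a, c} \<in> E \<or> {b, c} \<in> E" using neg c by blast
      moreover have "{a, c} = {c, a}" "{b, c} = {c, b}" by (rule insert_commute)+
      ultimately show ?thesis by simp
    qed blast
  qed
  from diam obtain x y where xy: "x \<in> V" "y \<in> V" "dist_G V E x y \<ge> 4" unfolding diameter_ge_def by blast
  obtain xs where xs: "walk V E xs" "hd xs = x" "last xs = y" "length xs \<le> 4"
    using hub_walk[OF a b _ hub xy(1) xy(2)] e by blast
  have "dist_G V E x y \<le> length xs - 1" by (rule dist_le[OF xs(1-3)])
  then show False using xs(4) xy(3) by linarith
qed

lemma distT:
  assumes diam: "diameter_ge V E 4" and nl: "\<And>a. {a} \<notin> E"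
    and inV: "\<And>a b. {a, b} \<in> E \<Longrightarrow> a \<in> V \<and> b \<in> V"
    and a: "a \<in> V" and b: "b \<in> V"
  shows "real (dist_G V (complement V E) a b) = psi E a b"
proof -
  let ?C = "complement V E"
  consider "a = b" | "a \<noteq> b" "{a, b} \<notin> E" | "a \<noteq> b" "{a, b} \<in> E" by blast
  then show ?thesis
  proof cases
    case 1 then show ?thesis using dist_self[OF a] nl unfolding psi_def by simp
  next
    case 2
    then have c: "{a, b} \<in> ?C" using comp_mem[of a b V E] a b by simp
    then have w: "walk V ?C [a, b]" using a b by simp
    have "dist_G V ?C a b \<le> 1" using dist_le[OF w] by simp
    moreover have "dist_G V ?C a b \<ge> 1"
    proof -
      have "reach V ?C a b" unfolding reach_def using w by (intro exI[of _ "[a, b]"]) simp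
      then show ?thesis using dist_ge1[of V ?C a b] 2 by blast
    qed
    ultimately show ?thesis using 2 unfolding psi_def by simp
  next
    case 3
    obtain z where z: "z \<in> V" "z \<noteq> a" "z \<noteq> b" "{a, z} \<notin> E" "{b, z} \<notin> E"
      using diam_no_dom[OF diam 3(2) a b] by blast
    have c1: "{a, z} \<in> ?C" using comp_mem[of a z V E] a z by simp
    have "{z, b} = {b, z}" by (rule insert_commute)
    then have c2: "{z, b} \<in> ?C" using comp_mem[of z b V E] b z by simp
    have w: "walk V ?C [a, z, b]" using a b z c1 c2 by simp
    have r: "reach V ?C a b" unfolding reach_def using w by (intro exI[of _ "[a, z, b]"]) simp
    have nc: "{a, b} \<notin> ?C" using comp_mem[of a b V E] 3 by simp
    have "dist_G V ?C a b \<le> 2" using dist_le[of V ?C "[a, z, b]" a b] w by simp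
    moreover have "dist_G V ?C a b \<ge> 2" using dist_ge2[OF r 3(1) nc] .
    ultimately show ?thesis using 3 unfolding psi_def by simp
  qed
qed

context pth
begin

lemma ES_pv: assumes "{pv, y} \<in> ES" shows "y = pw"
proof -
  have "\<not> ((pv = pu \<and> y \<in> Xs) \<or> (y = pu \<and> pv \<in> Xs))" using pu_ne_pv pv_notin_Xs by auto
  then have h: "{pv, y} \<in> E" "\<not> ((pv = pv \<and> y \<in> Xs) \<or> (y = pv \<and> pv \<in> Xs))" using assms unfolding ES_alt by blast+
  then have "y \<notin> Xs" by simp
  moreover have "y \<in> neighbors V E pv" unfolding neighbors_def using h(1) edge_in by auto
  ultimately show ?thesis unfolding Xs_def by blast
qed

lemma pvpw: "{pv, pw} \<in> E"
proof -
  have "{P ! (length P - 2), P ! Suc (length P - 2)} \<in> E" using Pedge[of "length P - 2"] Pl by auto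
  moreover have "Suc (length P - 2) = length P - 1" using Pl by auto
  ultimately show ?thesis unfolding pw_def pv_nth by (simp add: insert_commute)
qed

lemma dist1_lower:
  assumes diam: "diameter_ge V E 4" and a: "a \<in> V" and b: "b \<in> V"
  shows "real (dist_G V (complement V ES) a b) \<ge> psi ES a b"
proof -
  let ?C = "complement V ES"
  have pvV: "pv \<in> V" and pwV: "pw \<in> V" using edge_in[OF pvpw] by auto
  obtain z where z: "z \<in> V" "z \<noteq> pv" "z \<noteq> pw" "{pv, z} \<notin> E" "{pw, z} \<notin> E"
    using diam_no_dom[OF diam pvpw pvV pwV] by blast
  have zX: "z \<notin> Xs" using z(4) Xs_edge by blast
  have pwX: "pw \<notin> Xs" unfolding Xs_def by simp
  have c1: "{pv, z} \<in> ?C"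
  proof -
    have "{pv, z} \<notin> ES" using ES_pv z(3) by blast
    then show ?thesis using comp_mem[of pv z V ES] pvV z by simp
  qed
  have c2: "{pw, z} \<in> ?C"
  proof -
    have "{pw, z} \<notin> ES" unfolding ES_alt using z(5) zX pwX by blast
    then show ?thesis using comp_mem[of pw z V ES] pwV z by simp
  qed
  have hub: "\<forall>c\<in>V. c = pv \<or> c = z \<or> {c, pv} \<in> ?C \<or> {c, z} \<in> ?C"
  proof
    fix c assume c: "c \<in> V"
    show "c = pv \<or> c = z \<or> {c, pv} \<in> ?C \<or> {c, z} \<in> ?C"
    proof (cases "c = pv \<or> {c, pv} \<in> ?C")
      case False
      then have "{c, pv} \<in> ES" using comp_mem[of c pv V ES] c pvV by auto
      moreover have "{c, pv} = {pv, c}" by (rule insert_commute)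
      ultimately have "c = pw" using ES_pv by simp
      then show ?thesis using c2 by simp
    qed blast
  qed
  have reach: "reach V ?C a b"
    using hub_walk[OF pvV z(1) _ hub a b] c1 unfolding reach_def by blast
  consider "a = b" | "a \<noteq> b" "{a, b} \<notin> ES" | "a \<noteq> b" "{a, b} \<in> ES" by blast
  then show ?thesis
  proof cases
    case 1 then show ?thesis using ES_noloop unfolding psi_def by simp
  next
    case 2 then show ?thesis using dist_ge1[OF reach] unfolding psi_def by simp
  next
    case 3
    have "{a, b} \<notin> ?C" using comp_mem[of a b V ES] 3 by simp
    then show ?thesis using dist_ge2[OF reach 3(1)] 3 unfolding psi_def by simp
  qed
qed

end


lemma dsl_sym: "dsl_matrix V Ed a b = dsl_matrix V Ed b a"
  unfolding dsl_matrix_def using dist_sym[of V Ed a b] by auto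

context pth
begin

lemma Oz_sg: "Oz V (\<lambda>a. z (sg a)) = Oz V z"
proof -
  define F where "F a b = (if a = b then 0 else (z (sg a) + z (sg b))^2)" for a b
  have "Oz V (\<lambda>a. z (sg a)) = (\<Sum>a\<in>V. \<Sum>b\<in>V. F a b)" unfolding Oz_def F_def ..
  also have "\<dots> = (\<Sum>a\<in>V. \<Sum>b\<in>V. F (sg a) b)" by (rule sum_sg[symmetric])
  also have "\<dots> = (\<Sum>a\<in>V. \<Sum>b\<in>V. F (sg a) (sg b))"
    by (rule sum.cong[OF refl]) (rule sum_sg[symmetric])
  also have "\<dots> = Oz V z"
    unfolding Oz_def F_def sg_inv sg_eq_iff ..
  finally show ?thesis .
qed

end

theorem mainTheorem2:
  fixes V :: "'a set" and E E1 :: "'a set set" and u v :: 'a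
  assumes "is_tree V E"
    and "diameter_ge V E 4"
    and "proper_gts V E u v E1"
  shows "mu1 V (complement V E1) > mu1 V (complement V E)"
proof -
  have g: "gts V E u v E1" and npu0: "\<not> pendant V E u" and npv0: "\<not> pendant V E v"
    using assms(3) unfolding proper_gts_def by auto
  from g obtain P where P: "walk V E P" "distinct P" "length P \<ge> 2" "hd P = u" "last P = v"
    "\<forall>i. 0 < i \<and> i < length P - 1 \<longrightarrow> Defs.degree V E (P ! i) = 2"
    and E1d: "E1 = (E - {{v, x} | x. x \<in> neighbors V E v - {P ! (length P - 2)}}) \<union> {{u, x} | x. x \<in> neighbors V E v - {P ! (length P - 2)}}"
    unfolding gts_def Let_def by blast
  interpret pth V E P
    by (unfold_locales) (use assms(1) P in auto)
  have uv: "u = pu" "v = pv" using P(4,5) unfolding pu_def pv_def by auto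
  have ES1: "E1 = ES" unfolding ES_def Xs_def pw_def using E1d uv by simp
  have Xne: "Xs \<noteq> {}" using Xs_ne npv0 uv by simp
  have Ane: "As \<noteq> {}" using As_ne npu0 uv by simp
  have finV: "finite V" by (rule fin)
  have puV: "pu \<in> V" and pvV: "pv \<in> V" using pu_P pv_P Pset by auto
  have Vne: "V \<noteq> {}" using puV by auto
  define A where "A = dsl_matrix V (complement V E)"
  define B where "B = dsl_matrix V (complement V ES)"
  have A_eq: "A a b = Mpsi V E a b" if "a \<in> V" "b \<in> V" for a b
  proof -
    have inV: "\<And>a b. {a, b} \<in> E \<Longrightarrow> a \<in> V \<and> b \<in> V" using edge_in by blast
    have dT: "real (dist_G V (complement V E) a c) = psi E a c" if "c \<in> V" for c
      using distT[OF assms(2) noloop inV \<open>a \<in> V\<close> that] .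
    have "transmission V (complement V E) a = (\<Sum>c\<in>V. psi E a c)"
      unfolding transmission_def using dT by (intro sum.cong refl) auto
    then show ?thesis unfolding A_def dsl_matrix_def Mpsi_def using dT[OF that(2)] by (cases "a = b") auto
  qed
  have B_ge: "Mpsi V ES a b \<le> B a b" if "a \<in> V" "b \<in> V" for a b
  proof -
    have dT: "psi ES a c \<le> real (dist_G V (complement V ES) a c)" if "c \<in> V" for c
      using dist1_lower[OF assms(2) \<open>a \<in> V\<close> that] .
    have "(\<Sum>c\<in>V. psi ES a c) \<le> transmission V (complement V ES) a"
      unfolding transmission_def using dT by (intro sum_mono) auto
    then show ?thesis unfolding B_def dsl_matrix_def Mpsi_def using dT[OF that(2)] by (cases "a = b") auto
  qed
  have symA: "\<forall>a\<in>V. \<forall>b\<in>V. A a b = A b a" unfolding A_def using dsl_sym by metis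
  have symB: "\<forall>a\<in>V. \<forall>b\<in>V. B a b = B b a" unfolding B_def using dsl_sym by metis
  obtain RA where RA: "Max {lam. is_eigenvalue_on V A lam} = RA" "\<forall>z. qf V A z \<le> RA * nrm V z"
    "\<exists>z. nrm V z = 1 \<and> qf V A z = RA"
    using mu_char[OF finV Vne symA] by blast
  obtain RB where RB: "Max {lam. is_eigenvalue_on V B lam} = RB" "\<forall>z. qf V B z \<le> RB * nrm V z"
    using mu_char[OF finV Vne symB] by blast
  have mu: "mu1 V (complement V E) = RA" "mu1 V (complement V E1) = RB"
    unfolding mu1_def ES1 using RA(1) RB(1) unfolding A_def B_def by auto
  have qfA: "qf V A z = qf V (Mpsi V E) z" for z by (rule qf_cong2) (simp add: A_eq)
  have mvA: "mv V A z a = mv V (Mpsi V E) z a" if "a \<in> V" for z a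
    unfolding mv_def using A_eq[OF that] by (intro sum.cong refl) auto
  obtain z0 where z0: "nrm V z0 = 1" "qf V A z0 = RA" using RA(3) by blast
  define x where "x a = \<bar>z0 a\<bar>" for a
  have xnn: "x a \<ge> 0" for a unfolding x_def by simp
  have nx: "nrm V x = 1" using z0(1) unfolding nrm_def x_def by simp
  have "qf V A z0 \<le> qf V A x"
    unfolding qf_def
  proof (intro sum_mono)
    fix a b assume "a \<in> V" "b \<in> V"
    then have "A a b \<ge> 0" using A_eq Mpsi_nonneg by metis
    moreover have "z0 a * z0 b \<le> x a * x b" unfolding x_def by (metis abs_ge_self abs_mult)
    ultimately have "A a b * (z0 a * z0 b) \<le> A a b * (x a * x b)" by (rule mult_left_mono[rotated])
    then show "A a b * z0 a * z0 b \<le> A a b * x a * x b" by (simp add: mult.assoc)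
  qed
  moreover have "qf V A x \<le> RA" using RA(2) nx by (metis mult.right_neutral)
  ultimately have "qf V A x = RA" using z0(2) by linarith
  then have qAx: "qf V A x = RA * nrm V x" using nx by simp
  have eigA: "\<forall>a\<in>V. mv V A x a = RA * x a" using max_eig[OF finV symA RA(2) qAx] .
  have pos: "x a > 0" if aV: "a \<in> V" for a
  proof -
    obtain c where c: "c \<in> V" "c \<noteq> a" using puV pvV pu_ne_pv by metis
    have "\<exists>b\<in>V. x b \<noteq> 0"
    proof (rule ccontr)
      assume "\<not> ?thesis"
      then have "nrm V x = 0" unfolding nrm_def by simp
      then show False using nx by simp
    qed
    then obtain b where b: "b \<in> V" "x b > 0" using xnn by (metis less_eq_real_def)
    have "x b \<le> (\<Sum>b\<in>V. x b)" by (rule member_le_sum) (use b finV xnn in auto)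
    also have "\<dots> \<le> (\<Sum>b\<in>V. A a b * x b)"
    proof (rule sum_mono)
      fix d assume "d \<in> V"
      then have "A a d \<ge> 1" using A_eq[OF aV] Mpsi_ge1[OF finV aV _ c] by metis
      then show "x d \<le> A a d * x d" using xnn[of d] by (simp add: mult_le_cancel_right1)
    qed
    also have "\<dots> = RA * x a" using eigA aV unfolding mv_def by simp
    finally have "RA * x a > 0" using b(2) by linarith
    then show ?thesis using xnn[of a] by (cases "x a = 0") auto
  qed
  have RBA: "RB > RA"
  proof (cases "x pv \<le> x pu")
    case True
    have h1: "qf V (Mpsi V ES) x \<le> qf V B x" by (rule qf_mono) (use B_ge xnn in auto)
    have "(\<Sum>y\<in>Xs. (x pu + x y)^2 - (x pv + x y)^2) \<ge> 0"
    proof (rule sum_nonneg)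
      fix y assume "y \<in> Xs"
      have "(x pv + x y)^2 \<le> (x pu + x y)^2" using True xnn[of pv] xnn[of y] by (intro power_mono) auto
      then show "(x pu + x y)^2 - (x pv + x y)^2 \<ge> 0" by simp
    qed
    then have "2 * qf V (Mpsi V E) x \<le> 2 * qf V (Mpsi V ES) x"
      unfolding qf_Mpsi[OF finV] Fq_diff by simp
    then have h2: "RA \<le> qf V B x" using h1 qfA[of x] qAx nx by simp
    show ?thesis
    proof (rule ccontr)
      assume "\<not> RB > RA"
      then have le: "RB \<le> RA" by simp
      have "qf V B x \<le> RB" using RB(2) nx by (metis mult.right_neutral)
      then have eq: "qf V B x = RB * nrm V x" "RB = RA" using h2 le nx by auto
      have eigB: "\<forall>a\<in>V. mv V B x a = RB * x a" using max_eig[OF finV symB RB(2) eq(1)] .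
      have "mv V (Mpsi V ES) x pu \<le> mv V B x pu" by (rule mv_mono) (use B_ge puV xnn in auto)
      also have "\<dots> = mv V (Mpsi V E) x pu"
      proof -
        have "mv V B x pu = RB * x pu" using eigB puV by blast
        moreover have "mv V A x pu = RA * x pu" using eigA puV by blast
        ultimately show ?thesis using eq(2) mvA[OF puV, of x] by simp
      qed
      finally have le2: "mv V (Mpsi V ES) x pu \<le> mv V (Mpsi V E) x pu" .
      have "mv V (Mpsi V ES) x pu - mv V (Mpsi V E) x pu
          = (\<Sum>b\<in>V. ((if {pu, b} \<in> ES then 1 else 0) - (if {pu, b} \<in> E then 1 else 0)) * (x pu + x b))"
        unfolding mv_Mpsi[OF finV puV] sum_subtractf[symmetric]
        by (intro sum.cong refl) (simp add: psi_def algebra_simps)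
      also have "\<dots> = (\<Sum>b\<in>Xs. x pu + x b)" by (rule row_diff)
      also have "\<dots> > 0"
      proof (rule sum_pos)
        show "finite Xs" using Xs_V finV finite_subset by blast
        show "Xs \<noteq> {}" by (rule Xne)
        fix b assume "b \<in> Xs"
        then show "0 < x pu + x b" using pos[OF puV] pos[of b] Xs_V by force
      qed
      finally show False using le2 by simp
    qed
  next
    case False
    define y where "y a = x (sg a)" for a
    have ynn: "y a \<ge> 0" for a unfolding y_def by (rule xnn)
    have ny: "nrm V y = 1" using nx sum_sg[of "\<lambda>a. (x a)^2"] unfolding nrm_def y_def by simp
    have h1: "qf V (Mpsi V ES) y \<le> qf V B y" by (rule qf_mono) (use B_ge ynn in auto)
    have "2 * qf V (Mpsi V ES) y = Oz V x + Fq V (pth.ES V E (rev P)) x"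
      unfolding qf_Mpsi[OF finV] y_def Oz_sg Fq_sg ..
    also have "\<dots> = Oz V x + Fq V E x + 2 * (\<Sum>a\<in>As. (x pv + x a)^2 - (x pu + x a)^2)"
      using pth.Fq_diff[OF rev_pth, of x] unfolding r_Xs r_pu r_pv by simp
    also have "\<dots> > Oz V x + Fq V E x"
    proof -
      have "(\<Sum>a\<in>As. (x pv + x a)^2 - (x pu + x a)^2) > 0"
      proof (rule sum_pos)
        show "finite As" using As_V finV finite_subset by blast
        show "As \<noteq> {}" by (rule Ane)
        fix a assume "a \<in> As"
        then have "a \<in> V" using As_V by auto
        have "(x pu + x a)^2 < (x pv + x a)^2"
          using False pos[OF puV] pos[OF \<open>a \<in> V\<close>] by (intro power_strict_mono) auto
        then show "0 < (x pv + x a)^2 - (x pu + x a)^2" by simp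
      qed
      then show ?thesis by simp
    qed
    also have "Oz V x + Fq V E x = 2 * RA"
      using qf_Mpsi[OF finV, of E x] qfA[of x] qAx nx by simp
    finally have "RA < qf V (Mpsi V ES) y" by simp
    also have "\<dots> \<le> qf V B y" by (rule h1)
    also have "\<dots> \<le> RB" using RB(2) ny by (metis mult.right_neutral)
    finally show ?thesis .
  qed
  then show ?thesis using mu by simp
qed


end
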